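(* Let $B$ and its $D(\mathfrak{D}_4)$-action be as in the context with $(\alpha,\beta,\gamma)=(1,1,-1)$ and $u_1,u_2,u_3,u_4\in\Bbbk^\times$ satisfying $u_3^{16}=u_4^{16}$. Then the invariant subring $B^{D(\mathfrak{D}_4)}$ is generated as a $\Bbbk$-algebra by homogeneous elements of degree at most $14$.
   Context: Let $\Bbbk=\mathbb{C}$, $i=\sqrt{-1}$, $\mathfrak{D}_4=\langle r,s\mid r^4=e,\ s^2=r^2,\ rsrs^{-1}=e\rangle$. The Drinfeld double $D(G)$ has basis $\{\phi_gh\}$, multiplication $(\phi_g h)(\phi_{g'}h')=\delta_{g,hg'h^{-1}}\phi_g hh'$, comultiplication $\Delta(\phi_gh)=\sum_x\phi_xh\otimes\phi_{x^{-1}g}h$, counit $\epsilon(\phi_gh)=\delta_{g,e}$. A right $D(G)$-module algebra is a $G$-graded algebra with a right $G$-action by algebra automorphisms with $A_x\cdot g\subseteq A_{g^{-1}xg}$, $\phi_x$ projecting onto $A_x$; the invariant subring $A^{D(G)}$ consists of the $G$-fixed elements of $A_e$. The algebra $B$ is $\Bbbk\langle x_1,x_2,y_1,y_2,z_1,z_2\rangle$ (generators of degree 1) modulo $x_1x_2-\alpha x_2x_1$, $y_1y_2-\beta y_2y_1$, $z_1z_2-\gamma z_2z_1$, $x_1y_1-u_1y_1x_2$, $x_2y_1-u_1y_1x_1$, $x_1y_2+u_1y_2x_2$, $x_2y_2+u_1y_2x_1$, $x_1z_1-iu_2z_1x_2$, $x_2z_1-iu_2z_1x_1$, $ix_1z_2-u_2z_2x_2$,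 $ix_2z_2-u_2z_2x_1$, $y_1z_2-u_3z_2y_1$, $y_2z_1-u_3z_1y_2$, $y_1z_1-u_4z_1y_1$, $y_2z_2-u_4z_2y_2$. The $D(\mathfrak{D}_4)$-module algebra structure is given on generators by: $x_1$: grade $s$, $x_1\cdot r=x_2$, $x_1\cdot s=-ix_1$; $x_2$: grade $sr^2$, $x_2\cdot r=-x_1$, $x_2\cdot s=ix_2$; $y_1$: grade $sr$, $y_1\cdot r=-y_2$, $y_1\cdot s=y_2$; $y_2$: grade $sr^3$, $y_2\cdot r=-y_1$, $y_2\cdot s=y_1$; $z_1$: grade $sr$, $z_1\cdot r=-iz_2$, $z_1\cdot s=z_2$; $z_2$: grade $sr^3$, $z_2\cdot r=-iz_1$, $z_2\cdot s=-z_1$. *)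

theory Defs
  imports Complex_Main
begin

datatype gen = X1 | X2 | Y1 | Y2 | Z1 | Z2

type_synonym word = "gen list"
type_synonym fpoly = "word \<Rightarrow> complex"

definition fsupp :: "fpoly \<Rightarrow> word set" where
  "fsupp f = {w. f w \<noteq> 0}"

definition FA :: "fpoly set" where
  "FA = {f. finite (fsupp f)}"

definition mon :: "word \<Rightarrow> fpoly" where
  "mon w = (\<lambda>v. if v = w then 1 else 0)"

definition padd :: "fpoly \<Rightarrow> fpoly \<Rightarrow> fpoly" where
  "padd f g = (\<lambda>w. f w + g w)"

definition psub :: "fpoly \<Rightarrow> fpoly \<Rightarrow> fpoly" where
  "psub f g = (\<lambda>w. f w - g w)"

definition psmul :: "complex \<Rightarrow> fpoly \<Rightarrow> fpoly" where
  "psmul c f = (\<lambda>w. c * f w)"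

definition pmul :: "fpoly \<Rightarrow> fpoly \<Rightarrow> fpoly" where
  "pmul f g = (\<lambda>w. \<Sum>i\<in>{0..length w}. f (take i w) * g (drop i w))"

inductive_set ideal_gen :: "fpoly set \<Rightarrow> fpoly set" for R where
  zero: "(\<lambda>_. 0) \<in> ideal_gen R"
| gen: "r \<in> R \<Longrightarrow> pmul (mon u) (pmul r (mon v)) \<in> ideal_gen R"
| add: "f \<in> ideal_gen R \<Longrightarrow> g \<in> ideal_gen R \<Longrightarrow> padd f g \<in> ideal_gen R"
| smul: "f \<in> ideal_gen R \<Longrightarrow> psmul c f \<in> ideal_gen R"

inductive_set subalg :: "fpoly set \<Rightarrow> fpoly set" for S where
  one: "mon [] \<in> subalg S"
| base: "s \<in> S \<Longrightarrow> s \<in> subalg S"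
| add: "f \<in> subalg S \<Longrightarrow> g \<in> subalg S \<Longrightarrow> padd f g \<in> subalg S"
| smul: "f \<in> subalg S \<Longrightarrow> psmul c f \<in> subalg S"
| mul: "f \<in> subalg S \<Longrightarrow> g \<in> subalg S \<Longrightarrow> pmul f g \<in> subalg S"

definition homog :: "nat \<Rightarrow> fpoly \<Rightarrow> bool" where
  "homog d f \<longleftrightarrow> (\<forall>w. f w \<noteq> 0 \<longrightarrow> length w = d)"

definition rel :: "complex \<Rightarrow> gen \<Rightarrow> gen \<Rightarrow> complex \<Rightarrow> gen \<Rightarrow> gen \<Rightarrow> fpoly" where
  "rel c1 a b c2 d e = padd (psmul c1 (mon [a, b])) (psmul c2 (mon [d, e]))"

definition Brels :: "complex \<Rightarrow> complex \<Rightarrow> complex \<Rightarrow> complex \<Rightarrow> complex \<Rightarrow> complex \<Rightarrow> complex \<Rightarrow> fpoly set" where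
  "Brels \<alpha> \<beta> \<gamma> u1 u2 u3 u4 =
    { rel 1 X1 X2 (-\<alpha>) X2 X1,
      rel 1 Y1 Y2 (-\<beta>) Y2 Y1,
      rel 1 Z1 Z2 (-\<gamma>) Z2 Z1,
      rel 1 X1 Y1 (-u1) Y1 X2,
      rel 1 X2 Y1 (-u1) Y1 X1,
      rel 1 X1 Y2 u1 Y2 X2,
      rel 1 X2 Y2 u1 Y2 X1,
      rel 1 X1 Z1 (-\<i> * u2) Z1 X2,
      rel 1 X2 Z1 (-\<i> * u2) Z1 X1,
      rel \<i> X1 Z2 (-u2) Z2 X2,
      rel \<i> X2 Z2 (-u2) Z2 X1,
      rel 1 Y1 Z2 (-u3) Z2 Y1,
      rel 1 Y2 Z1 (-u3) Z1 Y2,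
      rel 1 Y1 Z1 (-u4) Z1 Y1,
      rel 1 Y2 Z2 (-u4) Z2 Y2 }"

section \<open>The group D_4 = <r,s | r^4 = e, s^2 = r^2, r s r s^{-1} = e>\<close>

text \<open>An element (a,b) stands for r^a s^b, with a < 4, b < 2.  Note s r = r^{-1} s.\<close>
type_synonym grp = "nat \<times> nat"

definition Grp :: "grp set" where
  "Grp = {0..<4} \<times> {0..<2}"

definition gmul :: "grp \<Rightarrow> grp \<Rightarrow> grp" where
  "gmul x y = (case x of (a, b) \<Rightarrow> case y of (c, d) \<Rightarrow>
     if b = 0 then ((a + c) mod 4, d)
     else if d = 0 then ((a + 3 * c) mod 4, 1)
     else ((a + 3 * c + 2) mod 4, 0))"

definition ge :: grp where "ge = (0, 0)"
definition gr :: grp where "gr = (1, 0)"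
definition gs :: grp where "gs = (0, 1)"

fun grade :: "gen \<Rightarrow> grp" where
  "grade X1 = gs"
| "grade X2 = gmul gs (gmul gr gr)"
| "grade Y1 = gmul gs gr"
| "grade Y2 = gmul gs (gmul gr (gmul gr gr))"
| "grade Z1 = gmul gs gr"
| "grade Z2 = gmul gs (gmul gr (gmul gr gr))"

definition wgrade :: "word \<Rightarrow> grp" where
  "wgrade w = foldr (\<lambda>x acc. gmul (grade x) acc) w ge"

definition proj_e :: "fpoly \<Rightarrow> fpoly" where
  "proj_e f = (\<lambda>w. if wgrade w = ge then f w else 0)"

text \<open>Action of r and s on generators: x . g = c * x'.\<close>
fun act_r :: "gen \<Rightarrow> complex \<times> gen" where
  "act_r X1 = (1, X2)"
| "act_r X2 = (-1, X1)"
| "act_r Y1 = (-1, Y2)"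
| "act_r Y2 = (-1, Y1)"
| "act_r Z1 = (-\<i>, Z2)"
| "act_r Z2 = (-\<i>, Z1)"

fun act_s :: "gen \<Rightarrow> complex \<times> gen" where
  "act_s X1 = (-\<i>, X1)"
| "act_s X2 = (\<i>, X2)"
| "act_s Y1 = (1, Y2)"
| "act_s Y2 = (1, Y1)"
| "act_s Z1 = (1, Z2)"
| "act_s Z2 = (-1, Z1)"

definition act_poly :: "(gen \<Rightarrow> complex \<times> gen) \<Rightarrow> fpoly \<Rightarrow> fpoly" where
  "act_poly m f = (\<lambda>v. \<Sum>w\<in>fsupp f.
      if map (snd \<circ> m) w = v then prod_list (map (fst \<circ> m) w) * f w else 0)"

definition act_g :: "grp \<Rightarrow> fpoly \<Rightarrow> fpoly" where
  "act_g g f = (case g of (a, b) \<Rightarrow> (act_poly act_s ^^ b) ((act_poly act_r ^^ a) f))"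

text \<open>f (a representative in the free algebra) represents an element of B^{D(G)}:
  its class lies in B_e and is fixed by every group element.\<close>
definition Binv :: "fpoly set \<Rightarrow> fpoly \<Rightarrow> bool" where
  "Binv R f \<longleftrightarrow> f \<in> FA \<and> psub f (proj_e f) \<in> ideal_gen R
      \<and> (\<forall>g\<in>Grp. psub (act_g g f) f \<in> ideal_gen R)"

end

theory Submission
  imports Defs
begin

lemma FA_iff: "f \<in> FA \<longleftrightarrow> finite {w. f w \<noteq> 0}" by (simp add: FA_def fsupp_def)

lemma mon_FA[simp]: "mon w \<in> FA"
  by (simp add: FA_iff mon_def)
lemma zero_FA[simp]: "(\<lambda>_. 0) \<in> FA" by (simp add: FA_iff)
lemma padd_FA[simp]: "f \<in> FA \<Longrightarrow> g \<in> FA \<Longrightarrow> padd f g \<in> FA"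
  unfolding FA_iff padd_def
  by (rule finite_subset[of _ "{w. f w \<noteq> 0} \<union> {w. g w \<noteq> 0}"]) auto
lemma psmul_FA[simp]: "f \<in> FA \<Longrightarrow> psmul c f \<in> FA"
  unfolding FA_iff psmul_def
  by (rule finite_subset[of _ "{w. f w \<noteq> 0}"]) auto
lemma psub_FA[simp]: "f \<in> FA \<Longrightarrow> g \<in> FA \<Longrightarrow> psub f g \<in> FA"
  unfolding FA_iff psub_def
  by (rule finite_subset[of _ "{w. f w \<noteq> 0} \<union> {w. g w \<noteq> 0}"]) auto

lemma pmul_FA[simp]: assumes "f \<in> FA" "g \<in> FA" shows "pmul f g \<in> FA"
proof -
  let ?F = "{w. f w \<noteq> 0}" and ?G = "{w. g w \<noteq> 0}"
  have "{w. pmul f g w \<noteq> 0} \<subseteq> (\<lambda>(x,y). x @ y) ` (?F \<times> ?G)"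
  proof
    fix w assume "w \<in> {w. pmul f g w \<noteq> 0}"
    then obtain i where "f (take i w) * g (drop i w) \<noteq> 0"
      unfolding pmul_def by (auto elim: sum.not_neutral_contains_not_neutral)
    then show "w \<in> (\<lambda>(x,y). x @ y) ` (?F \<times> ?G)"
      by (intro image_eqI[of _ _ "(take i w, drop i w)"]) auto
  qed
  moreover have "finite ((\<lambda>(x,y). x @ y) ` (?F \<times> ?G))" using assms by (auto simp: FA_iff)
  ultimately show ?thesis by (auto simp: FA_iff intro: finite_subset)
qed

lemma pmul_padd_left: "pmul (padd f g) h = padd (pmul f h) (pmul g h)"
  by (auto simp: pmul_def padd_def distrib_right sum.distrib)
lemma pmul_padd_right: "pmul h (padd f g) = padd (pmul h f) (pmul h g)"
  by (auto simp: pmul_def padd_def distrib_left sum.distrib)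
lemma pmul_psmul_left: "pmul (psmul c f) h = psmul c (pmul f h)"
  by (auto simp: pmul_def psmul_def sum_distrib_left mult.assoc)
lemma pmul_psmul_right: "pmul h (psmul c f) = psmul c (pmul h f)"
  by (auto simp: pmul_def psmul_def sum_distrib_left mult.assoc mult.left_commute)
lemma pmul_zero_left[simp]: "pmul (\<lambda>_. 0) h = (\<lambda>_. 0)" by (simp add: pmul_def)
lemma pmul_zero_right[simp]: "pmul h (\<lambda>_. 0) = (\<lambda>_. 0)" by (simp add: pmul_def)

lemma take_drop_eq: "(take i w = u \<and> drop i w = v) \<longleftrightarrow> (w = u @ v \<and> i = length u)" if "i \<le> length w"
  using that by (auto simp: min_def)

lemma pmul_mon_mon: "pmul (mon u) (mon v) = mon (u @ v)"
proof
  fix w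
  have "pmul (mon u) (mon v) w = (\<Sum>i\<in>{0..length w}. if w = u @ v \<and> i = length u then 1 else 0)"
    unfolding pmul_def mon_def by (intro sum.cong refl) (auto simp: take_drop_eq)
  also have "\<dots> = mon (u @ v) w"
    by (cases "w = u @ v") (auto simp: mon_def)
  finally show "pmul (mon u) (mon v) w = mon (u @ v) w" .
qed

lemma FA_induct[consumes 1, case_names zero step]:
  assumes "f \<in> FA" "P (\<lambda>_. 0)"
    "\<And>g w c. g \<in> FA \<Longrightarrow> g w = 0 \<Longrightarrow> P g \<Longrightarrow> (\<forall>x. g x \<noteq> 0 \<longrightarrow> f x \<noteq> 0) \<Longrightarrow> f w \<noteq> 0 \<Longrightarrow> c = f w \<Longrightarrow>
        P (padd (psmul c (mon w)) g)"
  shows "P f"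
proof -
  have "\<forall>g. {w. g w \<noteq> 0} = S \<longrightarrow> (\<forall>x. g x \<noteq> 0 \<longrightarrow> f x \<noteq> 0) \<longrightarrow> (\<forall>x. g x \<noteq> 0 \<longrightarrow> g x = f x) \<longrightarrow> P g"
    if "finite S" for S
    using that
  proof (induction S)
    case empty
    then show ?case using assms(2) by (auto simp: fun_eq_iff)
  next
    case (insert w S)
    show ?case
    proof (intro allI impI)
      fix g assume g: "{w. g w \<noteq> 0} = insert w S" "\<forall>x. g x \<noteq> 0 \<longrightarrow> f x \<noteq> 0" "\<forall>x. g x \<noteq> 0 \<longrightarrow> g x = f x"
      let ?g = "g(w := 0)"
      have s: "{x. ?g x \<noteq> 0} = S" using g(1) insert(2) by auto
      have "P ?g" using insert.IH s g by auto
      moreover have "?g \<in> FA" using s insert(1) by (simp add: FA_iff)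
      moreover have gw: "g w \<noteq> 0" using g(1) by auto
      ultimately have "P (padd (psmul (f w) (mon w)) ?g)"
        using assms(3)[of ?g w "f w"] g by auto
      moreover have "padd (psmul (f w) (mon w)) ?g = g"
        using g gw by (auto simp: fun_eq_iff padd_def psmul_def mon_def)
      ultimately show "P g" by simp
    qed
  qed
  then show ?thesis using assms(1) by (auto simp: FA_iff)
qed

lemma pmul_assoc: assumes "f \<in> FA" "g \<in> FA" "h \<in> FA"
  shows "pmul (pmul f g) h = pmul f (pmul g h)"
  using assms(1)
proof (induction rule: FA_induct)
  case zero then show ?case by simp
next
  case (step f' w c)
  have "pmul (pmul (mon w) g) h = pmul (mon w) (pmul g h)"
    using assms(2)
  proof (induction rule: FA_induct)
    case zero then show ?case by simp
  next
    case (step g' w2 c2)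
    have "pmul (pmul (mon w) (mon w2)) h = pmul (mon w) (pmul (mon w2) h)"
      using assms(3)
    proof (induction rule: FA_induct)
      case zero then show ?case by simp
    next
      case (step h' w3 c3)
      then show ?case
        by (simp add: pmul_padd_right pmul_psmul_right pmul_mon_mon)
    qed
    with step show ?case
      by (simp add: pmul_padd_right pmul_padd_left pmul_psmul_right pmul_psmul_left)
  qed
  with step show ?case
    by (simp add: pmul_padd_left pmul_psmul_left)
qed

lemma pmul_mon_nil_left[simp]: "pmul (mon []) f = f"
proof
  fix w
  have "pmul (mon []) f w = (\<Sum>i\<in>{0..length w}. if i = 0 then f w else 0)"
    unfolding pmul_def mon_def by (intro sum.cong refl) auto
  then show "pmul (mon []) f w = f w" by simp
qed

lemma pmul_mon_nil_right[simp]: "pmul f (mon []) = f"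
proof
  fix w
  have "pmul f (mon []) w = (\<Sum>i\<in>{0..length w}. if i = length w then f w else 0)"
    unfolding pmul_def mon_def by (intro sum.cong refl) auto
  then show "pmul f (mon []) w = f w" by simp
qed

lemma psub_eq: "psub f g = padd f (psmul (-1) g)"
  by (simp add: psub_def padd_def psmul_def fun_eq_iff)

context fixes R :: "fpoly set" assumes RFA: "R \<subseteq> FA"
begin

lemma ideal_FA: "f \<in> ideal_gen R \<Longrightarrow> f \<in> FA"
  by (induction rule: ideal_gen.induct) (use RFA in auto)

lemma ideal_psub: "f \<in> ideal_gen R \<Longrightarrow> g \<in> ideal_gen R \<Longrightarrow> psub f g \<in> ideal_gen R"
  by (simp add: psub_eq ideal_gen.add ideal_gen.smul)

lemma ideal_mon_left: "f \<in> ideal_gen R \<Longrightarrow> pmul (mon u) f \<in> ideal_gen R"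
proof (induction rule: ideal_gen.induct)
  case zero then show ?case by (simp add: ideal_gen.zero)
next
  case (gen r u' v)
  have "pmul (mon u) (pmul (mon u') (pmul r (mon v))) = pmul (mon (u @ u')) (pmul r (mon v))"
    using gen RFA by (subst pmul_assoc[symmetric]) (auto simp: pmul_mon_mon)
  then show ?case using gen by (simp add: ideal_gen.gen)
next
  case (add f g) then show ?case by (simp add: pmul_padd_right ideal_gen.add)
next
  case (smul f c) then show ?case by (simp add: pmul_psmul_right ideal_gen.smul)
qed

lemma ideal_mon_right: "f \<in> ideal_gen R \<Longrightarrow> pmul f (mon u) \<in> ideal_gen R"
proof (induction rule: ideal_gen.induct)
  case zero then show ?case by (simp add: ideal_gen.zero)
next
  case (gen r u' v)
  have "pmul (pmul (mon u') (pmul r (mon v))) (mon u) = pmul (mon u') (pmul r (mon (v @ u)))"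
    using gen RFA by (auto simp: pmul_assoc pmul_mon_mon)
  then show ?case using gen by (simp add: ideal_gen.gen)
next
  case (add f g) then show ?case by (simp add: pmul_padd_left ideal_gen.add)
next
  case (smul f c) then show ?case by (simp add: pmul_psmul_left ideal_gen.smul)
qed

lemma ideal_mul_left: "h \<in> FA \<Longrightarrow> f \<in> ideal_gen R \<Longrightarrow> pmul h f \<in> ideal_gen R"
proof (induction rule: FA_induct)
  case zero then show ?case by (simp add: ideal_gen.zero)
next
  case (step g w c) then show ?case
    by (simp add: pmul_padd_left pmul_psmul_left ideal_gen.add ideal_gen.smul ideal_mon_left)
qed

lemma ideal_mul_right: "h \<in> FA \<Longrightarrow> f \<in> ideal_gen R \<Longrightarrow> pmul f h \<in> ideal_gen R"
proof (induction rule: FA_induct)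
  case zero then show ?case by (simp add: ideal_gen.zero)
next
  case (step g w c) then show ?case
    by (simp add: pmul_padd_right pmul_psmul_right ideal_gen.add ideal_gen.smul ideal_mon_right)
qed

lemma ideal_sum: "finite I \<Longrightarrow> (\<And>i. i \<in> I \<Longrightarrow> F i \<in> ideal_gen R) \<Longrightarrow> (\<lambda>w. \<Sum>i\<in>I. F i w) \<in> ideal_gen R"
proof (induction rule: finite_induct)
  case empty then show ?case by (simp add: ideal_gen.zero)
next
  case (insert x I)
  have "(\<lambda>w. \<Sum>i\<in>insert x I. F i w) = padd (F x) (\<lambda>w. \<Sum>i\<in>I. F i w)"
    using insert by (simp add: padd_def fun_eq_iff)
  then show ?case using insert by (simp add: ideal_gen.add)
qed

lemma ideal_rel: "r \<in> R \<Longrightarrow> r \<in> ideal_gen R"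
  using ideal_gen.gen[of r R "[]" "[]"] by simp

definition cong :: "fpoly \<Rightarrow> fpoly \<Rightarrow> bool" where
  "cong f g \<longleftrightarrow> psub f g \<in> ideal_gen R"

lemma cong_refl[simp]: "cong f f"
proof -
  have "psub f f = (\<lambda>_. 0)" by (simp add: psub_def fun_eq_iff)
  then show ?thesis by (simp add: cong_def ideal_gen.zero)
qed

lemma cong_sym: "cong f g \<Longrightarrow> cong g f"
proof -
  assume "cong f g"
  moreover have "psub g f = psmul (-1) (psub f g)" by (simp add: psub_def psmul_def fun_eq_iff)
  ultimately show ?thesis by (simp add: cong_def ideal_gen.smul)
qed

lemma cong_trans: "cong f g \<Longrightarrow> cong g h \<Longrightarrow> cong f h"
proof -
  assume "cong f g" "cong g h"
  moreover have "psub f h = padd (psub f g) (psub g h)" by (simp add: psub_def padd_def fun_eq_iff)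
  ultimately show ?thesis by (simp add: cong_def ideal_gen.add)
qed

lemma cong_padd: "cong f f' \<Longrightarrow> cong g g' \<Longrightarrow> cong (padd f g) (padd f' g')"
proof -
  assume "cong f f'" "cong g g'"
  moreover have "psub (padd f g) (padd f' g') = padd (psub f f') (psub g g')"
    by (simp add: psub_def padd_def fun_eq_iff)
  ultimately show ?thesis by (simp add: cong_def ideal_gen.add)
qed

lemma cong_psmul: "cong f f' \<Longrightarrow> cong (psmul c f) (psmul c f')"
proof -
  assume "cong f f'"
  moreover have "psub (psmul c f) (psmul c f') = psmul c (psub f f')"
    by (simp add: psub_def psmul_def fun_eq_iff algebra_simps)
  ultimately show ?thesis by (simp add: cong_def ideal_gen.smul)
qed

lemma cong_pmul: "f \<in> FA \<Longrightarrow> f' \<in> FA \<Longrightarrow> g \<in> FA \<Longrightarrow> g' \<in> FA \<Longrightarrow>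
   cong f f' \<Longrightarrow> cong g g' \<Longrightarrow> cong (pmul f g) (pmul f' g')"
proof -
  assume fa: "f \<in> FA" "f' \<in> FA" "g \<in> FA" "g' \<in> FA" and c: "cong f f'" "cong g g'"
  have "psub (pmul f g) (pmul f' g') = padd (pmul (psub f f') g) (pmul f' (psub g g'))"
    by (simp add: psub_def padd_def pmul_def fun_eq_iff algebra_simps sum_subtractf)
  moreover have "pmul (psub f f') g \<in> ideal_gen R" using c fa by (simp add: cong_def ideal_mul_right)
  moreover have "pmul f' (psub g g') \<in> ideal_gen R" using c fa by (simp add: cong_def ideal_mul_left)
  ultimately show ?thesis by (simp add: cong_def ideal_gen.add)
qed

lemma cong_sum: "finite I \<Longrightarrow> (\<And>i. i \<in> I \<Longrightarrow> cong (F i) (G i)) \<Longrightarrow>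
   cong (\<lambda>w. \<Sum>i\<in>I. F i w) (\<lambda>w. \<Sum>i\<in>I. G i w)"
proof -
  assume "finite I" "\<And>i. i \<in> I \<Longrightarrow> cong (F i) (G i)"
  then have "(\<lambda>w. \<Sum>i\<in>I. psub (F i) (G i) w) \<in> ideal_gen R"
    by (intro ideal_sum) (auto simp: cong_def)
  moreover have "(\<lambda>w. \<Sum>i\<in>I. psub (F i) (G i) w) = psub (\<lambda>w. \<Sum>i\<in>I. F i w) (\<lambda>w. \<Sum>i\<in>I. G i w)"
    by (simp add: psub_def sum_subtractf fun_eq_iff)
  ultimately show ?thesis by (simp add: cong_def)
qed

end

lemma act_poly_superset:
  assumes "finite W" "fsupp f \<subseteq> W"
  shows "act_poly m f v = (\<Sum>w\<in>W. if map (snd \<circ> m) w = v then prod_list (map (fst \<circ> m) w) * f w else 0)"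
  unfolding act_poly_def
  by (rule sum.mono_neutral_left) (use assms in \<open>auto simp: fsupp_def\<close>)

lemma fsupp_FA: "f \<in> FA \<Longrightarrow> finite (fsupp f)" by (simp add: FA_def)

lemma act_padd: assumes "f \<in> FA" "g \<in> FA"
  shows "act_poly m (padd f g) = padd (act_poly m f) (act_poly m g)"
proof
  fix v
  let ?W = "fsupp f \<union> fsupp g"
  have fin: "finite ?W" using assms by (simp add: fsupp_FA)
  have s: "fsupp (padd f g) \<subseteq> ?W" by (auto simp: fsupp_def padd_def)
  have e1: "act_poly m (padd f g) v = (\<Sum>w\<in>?W. if map (snd \<circ> m) w = v then prod_list (map (fst \<circ> m) w) * padd f g w else 0)"
    by (rule act_poly_superset[OF fin s])
  have e2: "act_poly m f v = (\<Sum>w\<in>?W. if map (snd \<circ> m) w = v then prod_list (map (fst \<circ> m) w) * f w else 0)"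
    by (rule act_poly_superset[OF fin]) blast
  have e3: "act_poly m g v = (\<Sum>w\<in>?W. if map (snd \<circ> m) w = v then prod_list (map (fst \<circ> m) w) * g w else 0)"
    by (rule act_poly_superset[OF fin]) blast
  show "act_poly m (padd f g) v = padd (act_poly m f) (act_poly m g) v"
    by (subst e1) (simp add: e2 e3 padd_def sum.distrib[symmetric] distrib_left if_distrib cong: if_cong)
qed

lemma act_psmul: assumes "f \<in> FA"
  shows "act_poly m (psmul c f) = psmul c (act_poly m f)"
proof
  fix v
  have fin: "finite (fsupp f)" using assms by (simp add: fsupp_FA)
  have s: "fsupp (psmul c f) \<subseteq> fsupp f" by (auto simp: fsupp_def psmul_def)
  have e1: "act_poly m (psmul c f) v = (\<Sum>w\<in>fsupp f. if map (snd \<circ> m) w = v then prod_list (map (fst \<circ> m) w) * psmul c f w else 0)"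
    by (rule act_poly_superset[OF fin s])
  have e2: "act_poly m f v = (\<Sum>w\<in>fsupp f. if map (snd \<circ> m) w = v then prod_list (map (fst \<circ> m) w) * f w else 0)"
    by (rule act_poly_superset[OF fin]) blast
  show "act_poly m (psmul c f) v = psmul c (act_poly m f) v"
    unfolding psmul_def e2 using e1 by (simp add: psmul_def sum_distrib_left if_distrib mult.left_commute cong: if_cong)
qed

lemma act_zero[simp]: "act_poly m (\<lambda>_. 0) = (\<lambda>_. 0)"
  by (simp add: act_poly_def fsupp_def)

lemma act_mon: "act_poly m (mon w) = psmul (prod_list (map (fst \<circ> m) w)) (mon (map (snd \<circ> m) w))"
proof
  fix v
  have "fsupp (mon w) = {w}" by (auto simp: fsupp_def mon_def)
  then show "act_poly m (mon w) v = psmul (prod_list (map (fst \<circ> m) w)) (mon (map (snd \<circ> m) w)) v"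
    by (auto simp: act_poly_def psmul_def mon_def)
qed

lemma act_FA[simp]: "f \<in> FA \<Longrightarrow> act_poly m f \<in> FA"
proof (induction rule: FA_induct)
  case zero then show ?case by simp
next
  case (step g w c) then show ?case by (simp add: act_padd act_psmul act_mon)
qed

lemma act_mul: assumes "f \<in> FA" "g \<in> FA"
  shows "act_poly m (pmul f g) = pmul (act_poly m f) (act_poly m g)"
  using assms(1)
proof (induction rule: FA_induct)
  case zero then show ?case by simp
next
  case (step f' w c)
  have "act_poly m (pmul (mon w) g) = pmul (act_poly m (mon w)) (act_poly m g)"
    using assms(2)
  proof (induction rule: FA_induct)
    case zero then show ?case by simp
  next
    case (step g' w2 c2)
    then show ?case
      by (simp add: pmul_padd_right pmul_psmul_right act_padd act_psmul pmul_psmul_left pmul_mon_mon act_mon)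
        (simp add: psmul_def padd_def fun_eq_iff mult_ac)
  qed
  with step assms(2) show ?case
    by (simp add: pmul_padd_left pmul_psmul_left act_padd act_psmul)
qed

definition cmp :: "(gen \<Rightarrow> complex \<times> gen) \<Rightarrow> (gen \<Rightarrow> complex \<times> gen) \<Rightarrow> gen \<Rightarrow> complex \<times> gen" where
  "cmp m2 m1 t = (fst (m2 t) * fst (m1 (snd (m2 t))), snd (m1 (snd (m2 t))))"

lemma act_cmp_mon: "act_poly m1 (act_poly m2 (mon w)) = act_poly (cmp m2 m1) (mon w)"
proof -
  have "prod_list (map (fst \<circ> m2) w) * prod_list (map (fst \<circ> m1) (map (snd \<circ> m2) w))
      = prod_list (map (fst \<circ> cmp m2 m1) w)"
    by (induction w) (auto simp: cmp_def)
  moreover have "map (snd \<circ> m1) (map (snd \<circ> m2) w) = map (snd \<circ> cmp m2 m1) w"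
    by (simp add: cmp_def)
  ultimately show ?thesis by (simp add: act_mon act_psmul del: map_map) (simp add: psmul_def fun_eq_iff)
qed

lemma act_cmp: "f \<in> FA \<Longrightarrow> act_poly m1 (act_poly m2 f) = act_poly (cmp m2 m1) f"
proof (induction rule: FA_induct)
  case zero then show ?case by simp
next
  case (step g w c) then show ?case
    by (simp add: act_padd act_psmul act_cmp_mon)
qed

lemma act_ideal:
  assumes RFA: "R \<subseteq> FA" and rel: "\<And>r. r \<in> R \<Longrightarrow> act_poly m r \<in> ideal_gen R"
  shows "f \<in> ideal_gen R \<Longrightarrow> act_poly m f \<in> ideal_gen R"
proof (induction rule: ideal_gen.induct)
  case zero then show ?case by (simp add: ideal_gen.zero)
next
  case (gen r u v)
  have rf: "r \<in> FA" using gen RFA by auto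
  have "act_poly m (pmul (mon u) (pmul r (mon v))) =
     pmul (act_poly m (mon u)) (pmul (act_poly m r) (act_poly m (mon v)))"
    using rf by (simp add: act_mul)
  moreover have "pmul (act_poly m r) (act_poly m (mon v)) \<in> ideal_gen R"
    using rel[OF gen] RFA by (intro ideal_mul_right) auto
  ultimately show ?case using RFA
    by (simp add: ideal_mul_left)
next
  case (add f g)
  then show ?case using ideal_FA[OF RFA] by (simp add: act_padd ideal_gen.add)
next
  case (smul f c)
  then show ?case using ideal_FA[OF RFA] by (simp add: act_psmul ideal_gen.smul)
qed

definition idm :: "gen \<Rightarrow> complex \<times> gen" where "idm t = (1, t)"

lemma act_idm: "f \<in> FA \<Longrightarrow> act_poly idm f = f"
proof (induction rule: FA_induct)
  case zero then show ?case by simp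
next
  case (step g w c)
  have "act_poly idm (mon w) = mon w" proof -
    have "(\<Prod>x\<leftarrow>w. (1::complex)) = 1" by (induction w) auto
    then show ?thesis by (simp add: act_mon idm_def psmul_def comp_def)
  qed
  with step show ?case by (simp add: act_padd act_psmul)
qed

definition Mg :: "grp \<Rightarrow> gen \<Rightarrow> complex \<times> gen" where
  "Mg g = (case g of (a, b) \<Rightarrow> ((\<lambda>m. cmp m act_s) ^^ b) (((\<lambda>m. cmp m act_r) ^^ a) idm))"

lemma act_pow: "f \<in> FA \<Longrightarrow> (act_poly m1 ^^ n) (act_poly m f) = act_poly (((\<lambda>m. cmp m m1) ^^ n) m) f"
  by (induction n) (auto simp: act_cmp)

lemma act_g_Mg: "f \<in> FA \<Longrightarrow> act_g g f = act_poly (Mg g) f"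
  unfolding act_g_def Mg_def
  by (cases g) (simp add: act_pow[symmetric] act_idm)

lemma Grp_eq: "Grp = {(0,0),(1,0),(2,0),(3,0),(0,1),(1,1),(2,1),(3,1)}"
  unfolding Grp_def by (auto simp: atLeastLessThan_def lessThan_def atLeast_def)

definition Mt :: "grp \<Rightarrow> gen \<Rightarrow> complex \<times> gen" where
  "Mt g t = (if g = (0,0) then (case t of X1 \<Rightarrow> (1, X1) | X2 \<Rightarrow> (1, X2) | Y1 \<Rightarrow> (1, Y1) | Y2 \<Rightarrow> (1, Y2) | Z1 \<Rightarrow> (1, Z1) | Z2 \<Rightarrow> (1, Z2))
    else if g = (1,0) then (case t of X1 \<Rightarrow> (1, X2) | X2 \<Rightarrow> (-1, X1) | Y1 \<Rightarrow> (-1, Y2) | Y2 \<Rightarrow> (-1, Y1) | Z1 \<Rightarrow> (-\<i>, Z2) | Z2 \<Rightarrow> (-\<i>, Z1))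
    else if g = (2,0) then (case t of X1 \<Rightarrow> (-1, X1) | X2 \<Rightarrow> (-1, X2) | Y1 \<Rightarrow> (1, Y1) | Y2 \<Rightarrow> (1, Y2) | Z1 \<Rightarrow> (-1, Z1) | Z2 \<Rightarrow> (-1, Z2))
    else if g = (3,0) then (case t of X1 \<Rightarrow> (-1, X2) | X2 \<Rightarrow> (1, X1) | Y1 \<Rightarrow> (-1, Y2) | Y2 \<Rightarrow> (-1, Y1) | Z1 \<Rightarrow> (\<i>, Z2) | Z2 \<Rightarrow> (\<i>, Z1))
    else if g = (0,1) then (case t of X1 \<Rightarrow> (-\<i>, X1) | X2 \<Rightarrow> (\<i>, X2) | Y1 \<Rightarrow> (1, Y2) | Y2 \<Rightarrow> (1, Y1) | Z1 \<Rightarrow> (1, Z2) | Z2 \<Rightarrow> (-1, Z1))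
    else if g = (1,1) then (case t of X1 \<Rightarrow> (\<i>, X2) | X2 \<Rightarrow> (\<i>, X1) | Y1 \<Rightarrow> (-1, Y1) | Y2 \<Rightarrow> (-1, Y2) | Z1 \<Rightarrow> (\<i>, Z1) | Z2 \<Rightarrow> (-\<i>, Z2))
    else if g = (2,1) then (case t of X1 \<Rightarrow> (\<i>, X1) | X2 \<Rightarrow> (-\<i>, X2) | Y1 \<Rightarrow> (1, Y2) | Y2 \<Rightarrow> (1, Y1) | Z1 \<Rightarrow> (-1, Z2) | Z2 \<Rightarrow> (1, Z1))
    else if g = (3,1) then (case t of X1 \<Rightarrow> (-\<i>, X2) | X2 \<Rightarrow> (-\<i>, X1) | Y1 \<Rightarrow> (-1, Y1) | Y2 \<Rightarrow> (-1, Y2) | Z1 \<Rightarrow> (-\<i>, Z1) | Z2 \<Rightarrow> (\<i>, Z2))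
    else (1, t))"

lemma Mg_00: "Mg (0,0) = Mt (0,0)"
  by (simp add: fun_eq_iff Mg_def Mt_def cmp_def idm_def numeral_3_eq_3 numeral_2_eq_2 split: gen.split)

lemma Mg_10: "Mg (1,0) = Mt (1,0)"
  by (simp add: fun_eq_iff Mg_def Mt_def cmp_def idm_def numeral_3_eq_3 numeral_2_eq_2 split: gen.split)

lemma Mg_20: "Mg (2,0) = Mt (2,0)"
  by (simp add: fun_eq_iff Mg_def Mt_def cmp_def idm_def numeral_3_eq_3 numeral_2_eq_2 split: gen.split)

lemma Mg_30: "Mg (3,0) = Mt (3,0)"
  by (simp add: fun_eq_iff Mg_def Mt_def cmp_def idm_def numeral_3_eq_3 numeral_2_eq_2 split: gen.split)

lemma Mg_01: "Mg (0,1) = Mt (0,1)"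
  by (simp add: fun_eq_iff Mg_def Mt_def cmp_def idm_def numeral_3_eq_3 numeral_2_eq_2 split: gen.split)

lemma Mg_11: "Mg (1,1) = Mt (1,1)"
  by (simp add: fun_eq_iff Mg_def Mt_def cmp_def idm_def numeral_3_eq_3 numeral_2_eq_2 split: gen.split)

lemma Mg_21: "Mg (2,1) = Mt (2,1)"
  by (simp add: fun_eq_iff Mg_def Mt_def cmp_def idm_def numeral_3_eq_3 numeral_2_eq_2 split: gen.split)

lemma Mg_31: "Mg (3,1) = Mt (3,1)"
  by (simp add: fun_eq_iff Mg_def Mt_def cmp_def idm_def numeral_3_eq_3 numeral_2_eq_2 split: gen.split)

lemma Mt_r_00: "cmp (Mt (0,0)) act_r = Mt (gmul (0,0) gr)"
  by (simp add: fun_eq_iff Mt_def cmp_def gmul_def gr_def split: gen.split)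

lemma Mt_s_00: "cmp (Mt (0,0)) act_s = Mt (gmul (0,0) gs)"
  by (simp add: fun_eq_iff Mt_def cmp_def gmul_def gs_def split: gen.split)

lemma Mt_r_10: "cmp (Mt (1,0)) act_r = Mt (gmul (1,0) gr)"
  by (simp add: fun_eq_iff Mt_def cmp_def gmul_def gr_def split: gen.split)

lemma Mt_s_10: "cmp (Mt (1,0)) act_s = Mt (gmul (1,0) gs)"
  by (simp add: fun_eq_iff Mt_def cmp_def gmul_def gs_def split: gen.split)

lemma Mt_r_20: "cmp (Mt (2,0)) act_r = Mt (gmul (2,0) gr)"
  by (simp add: fun_eq_iff Mt_def cmp_def gmul_def gr_def split: gen.split)

lemma Mt_s_20: "cmp (Mt (2,0)) act_s = Mt (gmul (2,0) gs)"
  by (simp add: fun_eq_iff Mt_def cmp_def gmul_def gs_def split: gen.split)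

lemma Mt_r_30: "cmp (Mt (3,0)) act_r = Mt (gmul (3,0) gr)"
  by (simp add: fun_eq_iff Mt_def cmp_def gmul_def gr_def split: gen.split)

lemma Mt_s_30: "cmp (Mt (3,0)) act_s = Mt (gmul (3,0) gs)"
  by (simp add: fun_eq_iff Mt_def cmp_def gmul_def gs_def split: gen.split)

lemma Mt_r_01: "cmp (Mt (0,1)) act_r = Mt (gmul (0,1) gr)"
  by (simp add: fun_eq_iff Mt_def cmp_def gmul_def gr_def split: gen.split)

lemma Mt_s_01: "cmp (Mt (0,1)) act_s = Mt (gmul (0,1) gs)"
  by (simp add: fun_eq_iff Mt_def cmp_def gmul_def gs_def split: gen.split)

lemma Mt_r_11: "cmp (Mt (1,1)) act_r = Mt (gmul (1,1) gr)"
  by (simp add: fun_eq_iff Mt_def cmp_def gmul_def gr_def split: gen.split)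

lemma Mt_s_11: "cmp (Mt (1,1)) act_s = Mt (gmul (1,1) gs)"
  by (simp add: fun_eq_iff Mt_def cmp_def gmul_def gs_def split: gen.split)

lemma Mt_r_21: "cmp (Mt (2,1)) act_r = Mt (gmul (2,1) gr)"
  by (simp add: fun_eq_iff Mt_def cmp_def gmul_def gr_def split: gen.split)

lemma Mt_s_21: "cmp (Mt (2,1)) act_s = Mt (gmul (2,1) gs)"
  by (simp add: fun_eq_iff Mt_def cmp_def gmul_def gs_def split: gen.split)

lemma Mt_r_31: "cmp (Mt (3,1)) act_r = Mt (gmul (3,1) gr)"
  by (simp add: fun_eq_iff Mt_def cmp_def gmul_def gr_def split: gen.split)

lemma Mt_s_31: "cmp (Mt (3,1)) act_s = Mt (gmul (3,1) gs)"
  by (simp add: fun_eq_iff Mt_def cmp_def gmul_def gs_def split: gen.split)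

lemma rel_FA[simp]: "rel c1 a b c2 d e \<in> FA"
  by (simp add: rel_def)

lemma act_rel: "act_poly m (rel c1 a b c2 d e) =
   rel (c1 * (fst (m a) * fst (m b))) (snd (m a)) (snd (m b)) (c2 * (fst (m d) * fst (m e))) (snd (m d)) (snd (m e))"
  unfolding rel_def
  by (simp only: act_padd act_psmul act_mon psmul_FA mon_FA) (simp add: fun_eq_iff psmul_def padd_def mult_ac)

lemma iui[simp]: "\<i> * x * \<i> = - (x::complex)"
  by (simp add: mult.commute mult.left_commute)

lemma rel_scale: "rel (k * c1) a b (k * c2) d e = psmul k (rel c1 a b c2 d e)"
  by (simp add: rel_def psmul_def padd_def fun_eq_iff algebra_simps)

lemma rel_swap: "rel c1 a b c2 d e = rel c2 d e c1 a b"
  by (simp add: rel_def padd_def fun_eq_iff algebra_simps)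

locale BB =
  fixes u1 u2 u3 u4 :: complex
  assumes nz1: "u1 \<noteq> 0" and nz2: "u2 \<noteq> 0" and nz3: "u3 \<noteq> 0" and nz4: "u4 \<noteq> 0"
begin

definition RR where "RR = Brels 1 1 (-1) u1 u2 u3 u4"
definition JJ where "JJ = ideal_gen RR"

lemma RR_FA: "RR \<subseteq> FA" by (auto simp: RR_def Brels_def)

lemma rel_in_JJ: "r \<in> RR \<Longrightarrow> r \<in> JJ"
  unfolding JJ_def by (rule ideal_rel[OF RR_FA])

lemma relJ:
  assumes "rel c1' a' b' c2' d' e' \<in> RR" "snd (m a) = a'" "snd (m b) = b'" "snd (m d) = d'" "snd (m e) = e'"
    "c1 * (fst (m a) * fst (m b)) = k * c1'" "c2 * (fst (m d) * fst (m e)) = k * c2'"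
  shows "act_poly m (rel c1 a b c2 d e) \<in> JJ"
proof -
  have "act_poly m (rel c1 a b c2 d e) = psmul k (rel c1' a' b' c2' d' e')"
    using assms by (simp add: act_rel rel_scale[symmetric])
  then show ?thesis using rel_in_JJ[OF assms(1)] by (simp add: JJ_def ideal_gen.smul)
qed

lemma relJ_swap:
  assumes "rel c1' a' b' c2' d' e' \<in> RR" "snd (m d) = a'" "snd (m e) = b'" "snd (m a) = d'" "snd (m b) = e'"
    "c2 * (fst (m d) * fst (m e)) = k * c1'" "c1 * (fst (m a) * fst (m b)) = k * c2'"
  shows "act_poly m (rel c1 a b c2 d e) \<in> JJ"
proof -
  have "act_poly m (rel c1 a b c2 d e) = psmul k (rel c1' a' b' c2' d' e')"
    using assms by (simp add: act_rel rel_scale[symmetric] rel_swap[of _ a'])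
  then show ?thesis using rel_in_JJ[OF assms(1)] by (simp add: JJ_def ideal_gen.smul)
qed

lemma ar_r_0: "act_poly act_r (rel (1) X1 X2 ((-1)) X2 X1) \<in> JJ"
  by (rule relJ_swap[where k="1" and c1'="1" and c2'="(-1)" and a'=X1 and b'=X2 and d'=X2 and e'=X1])
     (simp_all add: RR_def Brels_def)

lemma ar_r_1: "act_poly act_r (rel (1) Y1 Y2 ((-1)) Y2 Y1) \<in> JJ"
  by (rule relJ_swap[where k="(-1)" and c1'="1" and c2'="(-1)" and a'=Y1 and b'=Y2 and d'=Y2 and e'=Y1])
     (simp_all add: RR_def Brels_def)

lemma ar_r_2: "act_poly act_r (rel (1) Z1 Z2 (1) Z2 Z1) \<in> JJ"
  by (rule relJ_swap[where k="(-1)" and c1'="1" and c2'="1" and a'=Z1 and b'=Z2 and d'=Z2 and e'=Z1])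
     (simp_all add: RR_def Brels_def)

lemma ar_r_3: "act_poly act_r (rel (1) X1 Y1 ((-1) * u1) Y1 X2) \<in> JJ"
  by (rule relJ[where k="(-1)" and c1'="1" and c2'="1 * u1" and a'=X2 and b'=Y2 and d'=Y2 and e'=X1])
     (simp_all add: RR_def Brels_def)

lemma ar_r_4: "act_poly act_r (rel (1) X2 Y1 ((-1) * u1) Y1 X1) \<in> JJ"
  by (rule relJ[where k="1" and c1'="1" and c2'="1 * u1" and a'=X1 and b'=Y2 and d'=Y2 and e'=X2])
     (simp_all add: RR_def Brels_def)

lemma ar_r_5: "act_poly act_r (rel (1) X1 Y2 (1 * u1) Y2 X2) \<in> JJ"
  by (rule relJ[where k="(-1)" and c1'="1" and c2'="(-1) * u1" and a'=X2 and b'=Y1 and d'=Y1 and e'=X1])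
     (simp_all add: RR_def Brels_def)

lemma ar_r_6: "act_poly act_r (rel (1) X2 Y2 (1 * u1) Y2 X1) \<in> JJ"
  by (rule relJ[where k="1" and c1'="1" and c2'="(-1) * u1" and a'=X1 and b'=Y1 and d'=Y1 and e'=X2])
     (simp_all add: RR_def Brels_def)

lemma ar_r_7: "act_poly act_r (rel (1) X1 Z1 ((-\<i>) * u2) Z1 X2) \<in> JJ"
  by (rule relJ[where k="(-1)" and c1'="\<i>" and c2'="(-1) * u2" and a'=X2 and b'=Z2 and d'=Z2 and e'=X1])
     (simp_all add: RR_def Brels_def)

lemma ar_r_8: "act_poly act_r (rel (1) X2 Z1 ((-\<i>) * u2) Z1 X1) \<in> JJ"
  by (rule relJ[where k="1" and c1'="\<i>" and c2'="(-1) * u2" and a'=X1 and b'=Z2 and d'=Z2 and e'=X2])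
     (simp_all add: RR_def Brels_def)

lemma ar_r_9: "act_poly act_r (rel (\<i>) X1 Z2 ((-1) * u2) Z2 X2) \<in> JJ"
  by (rule relJ[where k="1" and c1'="1" and c2'="(-\<i>) * u2" and a'=X2 and b'=Z1 and d'=Z1 and e'=X1])
     (simp_all add: RR_def Brels_def)

lemma ar_r_10: "act_poly act_r (rel (\<i>) X2 Z2 ((-1) * u2) Z2 X1) \<in> JJ"
  by (rule relJ[where k="(-1)" and c1'="1" and c2'="(-\<i>) * u2" and a'=X1 and b'=Z1 and d'=Z1 and e'=X2])
     (simp_all add: RR_def Brels_def)

lemma ar_r_11: "act_poly act_r (rel (1) Y1 Z2 ((-1) * u3) Z2 Y1) \<in> JJ"
  by (rule relJ[where k="\<i>" and c1'="1" and c2'="(-1) * u3" and a'=Y2 and b'=Z1 and d'=Z1 and e'=Y2])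
     (simp_all add: RR_def Brels_def)

lemma ar_r_12: "act_poly act_r (rel (1) Y2 Z1 ((-1) * u3) Z1 Y2) \<in> JJ"
  by (rule relJ[where k="\<i>" and c1'="1" and c2'="(-1) * u3" and a'=Y1 and b'=Z2 and d'=Z2 and e'=Y1])
     (simp_all add: RR_def Brels_def)

lemma ar_r_13: "act_poly act_r (rel (1) Y1 Z1 ((-1) * u4) Z1 Y1) \<in> JJ"
  by (rule relJ[where k="\<i>" and c1'="1" and c2'="(-1) * u4" and a'=Y2 and b'=Z2 and d'=Z2 and e'=Y2])
     (simp_all add: RR_def Brels_def)

lemma ar_r_14: "act_poly act_r (rel (1) Y2 Z2 ((-1) * u4) Z2 Y2) \<in> JJ"
  by (rule relJ[where k="\<i>" and c1'="1" and c2'="(-1) * u4" and a'=Y1 and b'=Z1 and d'=Z1 and e'=Y1])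
     (simp_all add: RR_def Brels_def)

lemma ar_s_15: "act_poly act_s (rel (1) X1 X2 ((-1)) X2 X1) \<in> JJ"
  by (rule relJ[where k="1" and c1'="1" and c2'="(-1)" and a'=X1 and b'=X2 and d'=X2 and e'=X1])
     (simp_all add: RR_def Brels_def)

lemma ar_s_16: "act_poly act_s (rel (1) Y1 Y2 ((-1)) Y2 Y1) \<in> JJ"
  by (rule relJ_swap[where k="(-1)" and c1'="1" and c2'="(-1)" and a'=Y1 and b'=Y2 and d'=Y2 and e'=Y1])
     (simp_all add: RR_def Brels_def)

lemma ar_s_17: "act_poly act_s (rel (1) Z1 Z2 (1) Z2 Z1) \<in> JJ"
  by (rule relJ_swap[where k="(-1)" and c1'="1" and c2'="1" and a'=Z1 and b'=Z2 and d'=Z2 and e'=Z1])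
     (simp_all add: RR_def Brels_def)

lemma ar_s_18: "act_poly act_s (rel (1) X1 Y1 ((-1) * u1) Y1 X2) \<in> JJ"
  by (rule relJ[where k="(-\<i>)" and c1'="1" and c2'="1 * u1" and a'=X1 and b'=Y2 and d'=Y2 and e'=X2])
     (simp_all add: RR_def Brels_def)

lemma ar_s_19: "act_poly act_s (rel (1) X2 Y1 ((-1) * u1) Y1 X1) \<in> JJ"
  by (rule relJ[where k="\<i>" and c1'="1" and c2'="1 * u1" and a'=X2 and b'=Y2 and d'=Y2 and e'=X1])
     (simp_all add: RR_def Brels_def)

lemma ar_s_20: "act_poly act_s (rel (1) X1 Y2 (1 * u1) Y2 X2) \<in> JJ"
  by (rule relJ[where k="(-\<i>)" and c1'="1" and c2'="(-1) * u1" and a'=X1 and b'=Y1 and d'=Y1 and e'=X2])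
     (simp_all add: RR_def Brels_def)

lemma ar_s_21: "act_poly act_s (rel (1) X2 Y2 (1 * u1) Y2 X1) \<in> JJ"
  by (rule relJ[where k="\<i>" and c1'="1" and c2'="(-1) * u1" and a'=X2 and b'=Y1 and d'=Y1 and e'=X1])
     (simp_all add: RR_def Brels_def)

lemma ar_s_22: "act_poly act_s (rel (1) X1 Z1 ((-\<i>) * u2) Z1 X2) \<in> JJ"
  by (rule relJ[where k="(-1)" and c1'="\<i>" and c2'="(-1) * u2" and a'=X1 and b'=Z2 and d'=Z2 and e'=X2])
     (simp_all add: RR_def Brels_def)

lemma ar_s_23: "act_poly act_s (rel (1) X2 Z1 ((-\<i>) * u2) Z1 X1) \<in> JJ"
  by (rule relJ[where k="1" and c1'="\<i>" and c2'="(-1) * u2" and a'=X2 and b'=Z2 and d'=Z2 and e'=X1])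
     (simp_all add: RR_def Brels_def)

lemma ar_s_24: "act_poly act_s (rel (\<i>) X1 Z2 ((-1) * u2) Z2 X2) \<in> JJ"
  by (rule relJ[where k="(-1)" and c1'="1" and c2'="(-\<i>) * u2" and a'=X1 and b'=Z1 and d'=Z1 and e'=X2])
     (simp_all add: RR_def Brels_def)

lemma ar_s_25: "act_poly act_s (rel (\<i>) X2 Z2 ((-1) * u2) Z2 X1) \<in> JJ"
  by (rule relJ[where k="1" and c1'="1" and c2'="(-\<i>) * u2" and a'=X2 and b'=Z1 and d'=Z1 and e'=X1])
     (simp_all add: RR_def Brels_def)

lemma ar_s_26: "act_poly act_s (rel (1) Y1 Z2 ((-1) * u3) Z2 Y1) \<in> JJ"
  by (rule relJ[where k="(-1)" and c1'="1" and c2'="(-1) * u3" and a'=Y2 and b'=Z1 and d'=Z1 and e'=Y2])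
     (simp_all add: RR_def Brels_def)

lemma ar_s_27: "act_poly act_s (rel (1) Y2 Z1 ((-1) * u3) Z1 Y2) \<in> JJ"
  by (rule relJ[where k="1" and c1'="1" and c2'="(-1) * u3" and a'=Y1 and b'=Z2 and d'=Z2 and e'=Y1])
     (simp_all add: RR_def Brels_def)

lemma ar_s_28: "act_poly act_s (rel (1) Y1 Z1 ((-1) * u4) Z1 Y1) \<in> JJ"
  by (rule relJ[where k="1" and c1'="1" and c2'="(-1) * u4" and a'=Y2 and b'=Z2 and d'=Z2 and e'=Y2])
     (simp_all add: RR_def Brels_def)

lemma ar_s_29: "act_poly act_s (rel (1) Y2 Z2 ((-1) * u4) Z2 Y2) \<in> JJ"
  by (rule relJ[where k="(-1)" and c1'="1" and c2'="(-1) * u4" and a'=Y1 and b'=Z1 and d'=Z1 and e'=Y1])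
     (simp_all add: RR_def Brels_def)

lemma act_r_J: "r \<in> RR \<Longrightarrow> act_poly act_r r \<in> JJ"
  unfolding RR_def Brels_def
  using ar_r_0 ar_r_1 ar_r_2 ar_r_3 ar_r_4 ar_r_5 ar_r_6 ar_r_7 ar_r_8 ar_r_9 ar_r_10 ar_r_11 ar_r_12 ar_r_13 ar_r_14 by (auto simp del: act_rel)

lemma act_s_J: "r \<in> RR \<Longrightarrow> act_poly act_s r \<in> JJ"
  unfolding RR_def Brels_def
  using ar_s_15 ar_s_16 ar_s_17 ar_s_18 ar_s_19 ar_s_20 ar_s_21 ar_s_22 ar_s_23 ar_s_24 ar_s_25 ar_s_26 ar_s_27 ar_s_28 ar_s_29 by (auto simp del: act_rel)

end

lemma act_g_FA[simp]: "f \<in> FA \<Longrightarrow> act_g g f \<in> FA"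
  by (simp add: act_g_Mg)

lemma act_g_Mt: "g \<in> Grp \<Longrightarrow> f \<in> FA \<Longrightarrow> act_g g f = act_poly (Mt g) f"
  unfolding Grp_eq using Mg_00 Mg_10 Mg_20 Mg_30 Mg_01 Mg_11 Mg_21 Mg_31
  by (auto simp: act_g_Mg)

lemma act_g_mul: "f \<in> FA \<Longrightarrow> g \<in> FA \<Longrightarrow> act_g h (pmul f g) = pmul (act_g h f) (act_g h g)"
  by (simp add: act_g_Mg act_mul)

lemma act_g_padd: "f \<in> FA \<Longrightarrow> g \<in> FA \<Longrightarrow> act_g h (padd f g) = padd (act_g h f) (act_g h g)"
  by (simp add: act_g_Mg act_padd)

lemma act_g_psmul: "f \<in> FA \<Longrightarrow> act_g h (psmul c f) = psmul c (act_g h f)"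
  by (simp add: act_g_Mg act_psmul)

lemma sum_FA: "finite I \<Longrightarrow> (\<And>i. i \<in> I \<Longrightarrow> F i \<in> FA) \<Longrightarrow> (\<lambda>w. \<Sum>i\<in>I. F i w) \<in> FA"
proof (induction rule: finite_induct)
  case empty then show ?case by simp
next
  case (insert x I)
  have "(\<lambda>w. \<Sum>i\<in>insert x I. F i w) = padd (F x) (\<lambda>w. \<Sum>i\<in>I. F i w)"
    using insert by (simp add: padd_def fun_eq_iff)
  then show ?case using insert by simp
qed

lemma act_sum: "finite I \<Longrightarrow> (\<And>i. i \<in> I \<Longrightarrow> F i \<in> FA) \<Longrightarrow>
    act_poly m (\<lambda>w. \<Sum>i\<in>I. F i w) = (\<lambda>w. \<Sum>i\<in>I. act_poly m (F i) w)"
proof (induction rule: finite_induct)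
  case empty then show ?case by simp
next
  case (insert x I)
  have eq: "(\<lambda>w. \<Sum>i\<in>insert x I. F i w) = padd (F x) (\<lambda>w. \<Sum>i\<in>I. F i w)"
    using insert by (simp add: padd_def fun_eq_iff)
  have fa: "(\<lambda>w. \<Sum>i\<in>I. F i w) \<in> FA" using insert by (intro sum_FA) auto
  have "act_poly m (\<lambda>w. \<Sum>i\<in>insert x I. F i w) = padd (act_poly m (F x)) (act_poly m (\<lambda>w. \<Sum>i\<in>I. F i w))"
    unfolding eq using insert fa by (intro act_padd) auto
  then show ?case using insert by (simp add: padd_def)
qed

lemma pmul_sum_left: "pmul (\<lambda>w. \<Sum>i\<in>I. F i w) G = (\<lambda>w. \<Sum>i\<in>I. pmul (F i) G w)"
  by (simp add: pmul_def fun_eq_iff sum_distrib_right sum.swap[of _ I])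

definition Rey :: "fpoly \<Rightarrow> fpoly" where
  "Rey F = psmul (1/8) (\<lambda>w. \<Sum>g\<in>Grp. act_g g F w)"

lemma finite_Grp[simp]: "finite Grp" by (simp add: Grp_def)

lemma Rey_FA[simp]: "F \<in> FA \<Longrightarrow> Rey F \<in> FA"
  unfolding Rey_def by (intro psmul_FA sum_FA) auto

lemma Mt_r: "g \<in> Grp \<Longrightarrow> cmp (Mt g) act_r = Mt (gmul g gr)"
  unfolding Grp_eq using Mt_r_00 Mt_r_10 Mt_r_20 Mt_r_30 Mt_r_01 Mt_r_11 Mt_r_21 Mt_r_31 by auto

lemma Mt_s: "g \<in> Grp \<Longrightarrow> cmp (Mt g) act_s = Mt (gmul g gs)"
  unfolding Grp_eq using Mt_s_00 Mt_s_10 Mt_s_20 Mt_s_30 Mt_s_01 Mt_s_11 Mt_s_21 Mt_s_31 by auto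

lemma bij_r: "bij_betw (\<lambda>g. gmul g gr) Grp Grp"
  unfolding bij_betw_def inj_on_def Grp_eq by (auto simp: gmul_def gr_def)

lemma bij_s: "bij_betw (\<lambda>g. gmul g gs) Grp Grp"
  unfolding bij_betw_def inj_on_def Grp_eq by (auto simp: gmul_def gs_def)

lemma Rey_act_gen:
  assumes F: "F \<in> FA" and law: "\<And>g. g \<in> Grp \<Longrightarrow> cmp (Mt g) m = Mt (h g)" and bij: "bij_betw h Grp Grp"
  shows "act_poly m (Rey F) = Rey F"
proof -
  have "act_poly m (\<lambda>w. \<Sum>g\<in>Grp. act_g g F w) = (\<lambda>w. \<Sum>g\<in>Grp. act_poly m (act_g g F) w)"
    using F by (intro act_sum) auto
  also have "\<dots> = (\<lambda>w. \<Sum>g\<in>Grp. act_g (h g) F w)"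
  proof -
    have "act_poly m (act_g g F) = act_g (h g) F" if "g \<in> Grp" for g
    proof -
      have "h g \<in> Grp" using bij that by (auto simp: bij_betw_def)
      then show ?thesis using that F by (simp add: act_g_Mt act_cmp law)
    qed
    then show ?thesis by simp
  qed
  also have "\<dots> = (\<lambda>w. \<Sum>g\<in>Grp. act_g g F w)"
    by (rule ext, rule sum.reindex_bij_betw[OF bij])
  finally show ?thesis unfolding Rey_def using F
    by (simp add: act_psmul sum_FA)
qed

lemma Rey_r: "F \<in> FA \<Longrightarrow> act_poly act_r (Rey F) = Rey F"
  by (rule Rey_act_gen[OF _ Mt_r bij_r])

lemma Rey_s: "F \<in> FA \<Longrightarrow> act_poly act_s (Rey F) = Rey F"
  by (rule Rey_act_gen[OF _ Mt_s bij_s])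

lemma Rey_inv: "F \<in> FA \<Longrightarrow> act_g g (Rey F) = Rey F"
proof -
  assume F: "F \<in> FA"
  have a: "(act_poly act_r ^^ n) (Rey F) = Rey F" for n
    by (induction n) (auto simp: Rey_r F)
  have b: "(act_poly act_s ^^ n) (Rey F) = Rey F" for n
    by (induction n) (auto simp: Rey_s F)
  show ?thesis unfolding act_g_def by (cases g) (simp add: a b)
qed

lemma Rey_padd: "F \<in> FA \<Longrightarrow> G \<in> FA \<Longrightarrow> Rey (padd F G) = padd (Rey F) (Rey G)"
proof -
  assume "F \<in> FA" "G \<in> FA"
  then have "act_g g (padd F G) = padd (act_g g F) (act_g g G)" for g by (simp add: act_g_padd)
  then show ?thesis by (simp add: Rey_def fun_eq_iff padd_def psmul_def sum.distrib algebra_simps)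
qed

lemma Rey_psmul: "F \<in> FA \<Longrightarrow> Rey (psmul c F) = psmul c (Rey F)"
proof -
  assume "F \<in> FA"
  then have "act_g g (psmul c F) = psmul c (act_g g F)" for g by (simp add: act_g_psmul)
  then show ?thesis by (simp add: Rey_def fun_eq_iff psmul_def sum_distrib_left algebra_simps)
qed

lemma Rey_mul: assumes "F \<in> FA" "G \<in> FA" "\<And>g. g \<in> Grp \<Longrightarrow> act_g g G = G"
  shows "Rey (pmul F G) = pmul (Rey F) G"
proof -
  have "(\<lambda>w. \<Sum>g\<in>Grp. act_g g (pmul F G) w) = (\<lambda>w. \<Sum>g\<in>Grp. pmul (act_g g F) G w)"
    using assms by (intro ext sum.cong refl) (simp add: act_g_mul)
  then show ?thesis unfolding Rey_def by (simp add: pmul_psmul_left pmul_sum_left)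
qed

context BB begin

lemma act_r_JJ: "F \<in> JJ \<Longrightarrow> act_poly act_r F \<in> JJ"
  unfolding JJ_def by (rule act_ideal[OF RR_FA]) (use act_r_J in \<open>auto simp: JJ_def\<close>)
lemma act_s_JJ: "F \<in> JJ \<Longrightarrow> act_poly act_s F \<in> JJ"
  unfolding JJ_def by (rule act_ideal[OF RR_FA]) (use act_s_J in \<open>auto simp: JJ_def\<close>)

lemma act_g_JJ: "F \<in> JJ \<Longrightarrow> act_g g F \<in> JJ"
proof -
  assume F: "F \<in> JJ"
  have a: "(act_poly act_r ^^ n) F \<in> JJ" for n
    by (induction n) (auto simp: F act_r_JJ)
  have b: "G \<in> JJ \<Longrightarrow> (act_poly act_s ^^ n) G \<in> JJ" for n G
    by (induction n) (auto simp: act_s_JJ)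
  show ?thesis unfolding act_g_def by (cases g) (simp add: a b)
qed

lemma JJ_FA: "F \<in> JJ \<Longrightarrow> F \<in> FA"
  unfolding JJ_def by (rule ideal_FA[OF RR_FA])

lemma Rey_JJ: "F \<in> JJ \<Longrightarrow> Rey F \<in> JJ"
  unfolding Rey_def JJ_def
  by (intro ideal_gen.smul ideal_sum[OF RR_FA] finite_Grp) (use act_g_JJ in \<open>auto simp: JJ_def\<close>)

abbreviation cg where "cg \<equiv> cong RR"

lemma cg_def': "cg f g \<longleftrightarrow> psub f g \<in> JJ"
  by (simp add: cong_def[OF RR_FA] JJ_def)

lemma Rey_psub: "F \<in> FA \<Longrightarrow> G \<in> FA \<Longrightarrow> Rey (psub F G) = psub (Rey F) (Rey G)"
  by (simp add: psub_eq Rey_padd Rey_psmul)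

lemma Rey_cg: "F \<in> FA \<Longrightarrow> G \<in> FA \<Longrightarrow> cg F G \<Longrightarrow> cg (Rey F) (Rey G)"
  by (simp add: cg_def' Rey_psub[symmetric] Rey_JJ)

end

lemma gmul_assoc: "x \<in> Grp \<Longrightarrow> y \<in> Grp \<Longrightarrow> z \<in> Grp \<Longrightarrow>
  gmul (gmul x y) z = gmul x (gmul y z)"
  unfolding Grp_eq by (auto simp: gmul_def)

lemma gmul_Grp[simp]: "x \<in> Grp \<Longrightarrow> y \<in> Grp \<Longrightarrow> gmul x y \<in> Grp"
  unfolding Grp_def by (auto simp: gmul_def split: prod.splits)

lemma ge_Grp[simp]: "ge \<in> Grp" by (simp add: ge_def Grp_def)
lemma grade_Grp[simp]: "grade t \<in> Grp"
  by (cases t) (simp_all add: gs_def gr_def gmul_def Grp_def)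

lemma wgrade_Grp[simp]: "wgrade w \<in> Grp"
  by (induction w) (auto simp: wgrade_def)

lemma wgrade_Cons[simp]: "wgrade (t # w) = gmul (grade t) (wgrade w)"
  by (simp add: wgrade_def)
lemma wgrade_Nil[simp]: "wgrade [] = ge"
  by (simp add: wgrade_def)

lemma gmul_ge_left[simp]: "x \<in> Grp \<Longrightarrow> gmul ge x = x"
  by (auto simp: Grp_def ge_def gmul_def)
lemma gmul_ge_right[simp]: "x \<in> Grp \<Longrightarrow> gmul x ge = x"
  by (auto simp: Grp_def ge_def gmul_def)

lemma wgrade_append: "wgrade (u @ v) = gmul (wgrade u) (wgrade v)"
  by (induction u) (auto simp: gmul_assoc)

definition phr :: "grp \<Rightarrow> grp" where
  "phr x = (case x of (a, b) \<Rightarrow> (if b = 0 then a else (a + 2) mod 4, b))"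
definition phs :: "grp \<Rightarrow> grp" where
  "phs x = (case x of (a, b) \<Rightarrow> ((4 - a) mod 4, b))"

lemma phr_hom: "x \<in> Grp \<Longrightarrow> y \<in> Grp \<Longrightarrow> phr (gmul x y) = gmul (phr x) (phr y)"
  unfolding Grp_eq by (auto simp: gmul_def phr_def)
lemma phs_hom: "x \<in> Grp \<Longrightarrow> y \<in> Grp \<Longrightarrow> phs (gmul x y) = gmul (phs x) (phs y)"
  unfolding Grp_eq by (auto simp: gmul_def phs_def)
lemma phr_ge: "x \<in> Grp \<Longrightarrow> phr x = ge \<longleftrightarrow> x = ge"
  unfolding Grp_eq by (auto simp: phr_def ge_def)
lemma phs_ge: "x \<in> Grp \<Longrightarrow> phs x = ge \<longleftrightarrow> x = ge"
  unfolding Grp_eq by (auto simp: phs_def ge_def)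
lemma phr_ge'[simp]: "phr ge = ge" by (simp add: phr_def ge_def)
lemma phs_ge'[simp]: "phs ge = ge" by (simp add: phs_def ge_def)
lemma phr_grade: "phr (grade t) = grade (snd (act_r t))"
  by (cases t) (simp_all add: phr_def gmul_def gs_def gr_def)
lemma phs_grade: "phs (grade t) = grade (snd (act_s t))"
  by (cases t) (simp_all add: phs_def gmul_def gs_def gr_def)

lemma wgrade_r: "wgrade (map (snd \<circ> act_r) w) = phr (wgrade w)"
  by (induction w) (simp_all add: phr_hom phr_grade)
lemma wgrade_s: "wgrade (map (snd \<circ> act_s) w) = phs (wgrade w)"
  by (induction w) (simp_all add: phs_hom phs_grade)

lemma proj_padd: "proj_e (padd f g) = padd (proj_e f) (proj_e g)"
  by (simp add: proj_e_def padd_def fun_eq_iff)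
lemma proj_psmul: "proj_e (psmul c f) = psmul c (proj_e f)"
  by (simp add: proj_e_def psmul_def fun_eq_iff)
lemma proj_zero[simp]: "proj_e (\<lambda>_. 0) = (\<lambda>_. 0)"
  by (simp add: proj_e_def fun_eq_iff)
lemma proj_mon: "proj_e (mon w) = (if wgrade w = ge then mon w else (\<lambda>_. 0))"
  by (auto simp: proj_e_def mon_def fun_eq_iff)
lemma proj_FA[simp]: "f \<in> FA \<Longrightarrow> proj_e f \<in> FA"
  unfolding FA_iff proj_e_def by (rule finite_subset[of _ "{w. f w \<noteq> 0}"]) auto

lemma proj_act_gen:
  assumes "\<And>w. wgrade (map (snd \<circ> m) w) = ge \<longleftrightarrow> wgrade w = ge"
  shows "f \<in> FA \<Longrightarrow> act_poly m (proj_e f) = proj_e (act_poly m f)"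
proof (induction rule: FA_induct)
  case zero then show ?case by simp
next
  case (step g w c)
  have "act_poly m (proj_e (mon w)) = proj_e (act_poly m (mon w))"
    using assms[of w] by (simp add: proj_mon act_mon proj_psmul) (simp add: psmul_def fun_eq_iff)
  with step show ?case
    by (simp add: proj_padd proj_psmul act_padd act_psmul)
qed

lemma proj_act_r: "f \<in> FA \<Longrightarrow> act_poly act_r (proj_e f) = proj_e (act_poly act_r f)"
  by (rule proj_act_gen) (simp add: wgrade_r phr_ge)
lemma proj_act_s: "f \<in> FA \<Longrightarrow> act_poly act_s (proj_e f) = proj_e (act_poly act_s f)"
  by (rule proj_act_gen) (simp add: wgrade_s phs_ge)

lemma proj_act_g: "f \<in> FA \<Longrightarrow> act_g g (proj_e f) = proj_e (act_g g f)"
proof -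
  assume f: "f \<in> FA"
  have a: "f \<in> FA \<Longrightarrow> (act_poly act_r ^^ n) (proj_e f) = proj_e ((act_poly act_r ^^ n) f) \<and> (act_poly act_r ^^ n) f \<in> FA" for n f
    by (induction n) (auto simp: proj_act_r)
  have b: "f \<in> FA \<Longrightarrow> (act_poly act_s ^^ n) (proj_e f) = proj_e ((act_poly act_s ^^ n) f) \<and> (act_poly act_s ^^ n) f \<in> FA" for n f
    by (induction n) (auto simp: proj_act_s)
  show ?thesis unfolding act_g_def using a[OF f] b by (cases g) auto
qed

lemma proj_sum: "proj_e (\<lambda>w. \<Sum>i\<in>I. F i w) = (\<lambda>w. \<Sum>i\<in>I. proj_e (F i) w)"
  by (simp add: proj_e_def fun_eq_iff)

lemma Rey_proj: "F \<in> FA \<Longrightarrow> proj_e (Rey F) = Rey (proj_e F)"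
  unfolding Rey_def by (simp add: proj_psmul proj_sum proj_act_g)

type_synonym vec = "gen \<Rightarrow> nat"

definition word :: "vec \<Rightarrow> word" where
  "word v = replicate (v X1) X1 @ replicate (v X2) X2 @ replicate (v Y1) Y1 @ replicate (v Y2) Y2
     @ replicate (v Z1) Z1 @ replicate (v Z2) Z2"

definition swx :: "vec \<Rightarrow> vec" where "swx v = v(X1 := v X2, X2 := v X1)"

definition ins :: "gen \<Rightarrow> vec \<Rightarrow> vec" where
  "ins t v = (let v' = (if t = X1 \<or> t = X2 then v else swx v) in v'(t := v' t + 1))"

definition nf :: "word \<Rightarrow> vec" where "nf w = foldr ins w (\<lambda>_. 0)"

fun flipx :: "gen \<Rightarrow> gen" where
  "flipx X1 = X2" | "flipx X2 = X1" | "flipx t = t"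

context BB begin

definition aeq :: "word \<Rightarrow> word \<Rightarrow> bool" where
  "aeq w w' \<longleftrightarrow> (\<exists>k. k \<noteq> 0 \<and> cg (mon w) (psmul k (mon w'))) \<and> wgrade w = wgrade w'"

lemma aeq_refl[simp]: "aeq w w"
  unfolding aeq_def by (simp, rule exI[of _ 1]) (simp add: psmul_def cong_refl[OF RR_FA])

lemma aeq_sym: "aeq w w' \<Longrightarrow> aeq w' w"
proof -
  assume "aeq w w'"
  then obtain k where k: "k \<noteq> 0" "cg (mon w) (psmul k (mon w'))" by (auto simp: aeq_def)
  have "cg (psmul (1/k) (mon w)) (psmul (1/k) (psmul k (mon w')))"
    using k(2) by (rule cong_psmul[OF RR_FA])
  moreover have "psmul (1/k) (psmul k (mon w')) = mon w'" using k by (simp add: psmul_def fun_eq_iff)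
  ultimately have "cg (mon w') (psmul (1/k) (mon w))" by (simp add: cong_sym[OF RR_FA])
  then show ?thesis using k \<open>aeq w w'\<close> unfolding aeq_def by auto (intro exI[of _ "1/k"], simp)
qed

lemma aeq_trans: "aeq w1 w2 \<Longrightarrow> aeq w2 w3 \<Longrightarrow> aeq w1 w3"
proof -
  assume "aeq w1 w2" "aeq w2 w3"
  then obtain k l where k: "k \<noteq> 0" "cg (mon w1) (psmul k (mon w2))" and l: "l \<noteq> 0" "cg (mon w2) (psmul l (mon w3))"
    by (auto simp: aeq_def)
  have "cg (psmul k (mon w2)) (psmul k (psmul l (mon w3)))" using l by (simp add: cong_psmul[OF RR_FA])
  moreover have "psmul k (psmul l (mon w3)) = psmul (k*l) (mon w3)" by (simp add: psmul_def fun_eq_iff)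
  ultimately have "cg (mon w1) (psmul (k*l) (mon w3))" using k cong_trans[OF RR_FA] by metis
  then show ?thesis using k l \<open>aeq w1 w2\<close> \<open>aeq w2 w3\<close> unfolding aeq_def by auto (intro exI[of _ "k*l"], simp)
qed

lemma aeq_ctx: "aeq w w' \<Longrightarrow> aeq (p @ w @ q) (p @ w' @ q)"
proof -
  assume "aeq w w'"
  then obtain k where k: "k \<noteq> 0" "cg (mon w) (psmul k (mon w'))" by (auto simp: aeq_def)
  have "cg (pmul (mon p) (pmul (mon w) (mon q))) (pmul (mon p) (pmul (psmul k (mon w')) (mon q)))"
    using k by (intro cong_pmul[OF RR_FA] cong_refl[OF RR_FA]) auto
  then have "cg (mon (p @ w @ q)) (psmul k (mon (p @ w' @ q)))"
    by (simp add: pmul_mon_mon pmul_psmul_left pmul_psmul_right)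
  then show ?thesis using k \<open>aeq w w'\<close> unfolding aeq_def by (auto simp: wgrade_append)
qed

lemma aeq_rel: assumes "rel c1 a b c2 d e \<in> RR" "c1 \<noteq> 0" "c2 \<noteq> 0" "wgrade [a,b] = wgrade [d,e]"
  shows "aeq [a,b] [d,e]"
proof -
  have "psub (mon [a,b]) (psmul (-c2/c1) (mon [d,e])) = psmul (1/c1) (rel c1 a b c2 d e)"
    using assms by (simp add: rel_def psub_def psmul_def padd_def fun_eq_iff field_simps)
  moreover have "psmul (1/c1) (rel c1 a b c2 d e) \<in> JJ"
    using rel_in_JJ[OF assms(1)] by (simp add: JJ_def ideal_gen.smul)
  ultimately have "cg (mon [a,b]) (psmul (-c2/c1) (mon [d,e]))" by (simp add: cg_def')
  then show ?thesis unfolding aeq_def using assms by (intro conjI exI[of _ "-c2/c1"]) simp_all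
qed

lemmas nzs = nz1 nz2 nz3 nz4

lemma aeq_steps:
  "aeq [X2,X1] [X1,X2]"
  "aeq [Y1,X1] [X2,Y1]" "aeq [Y1,X2] [X1,Y1]" "aeq [Y2,X1] [X2,Y2]" "aeq [Y2,X2] [X1,Y2]"
  "aeq [Z1,X1] [X2,Z1]" "aeq [Z1,X2] [X1,Z1]" "aeq [Z2,X1] [X2,Z2]" "aeq [Z2,X2] [X1,Z2]"
  "aeq [Z1,Y1] [Y1,Z1]" "aeq [Z1,Y2] [Y2,Z1]" "aeq [Z2,Y1] [Y1,Z2]" "aeq [Z2,Y2] [Y2,Z2]"
  "aeq [Y2,Y1] [Y1,Y2]" "aeq [Z2,Z1] [Z1,Z2]"
  by (rule aeq_sym, rule aeq_rel, auto simp: RR_def Brels_def nzs gmul_def gs_def gr_def ge_def)+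

lemma aeq_pass: "(\<And>l. l \<in> set B \<Longrightarrow> aeq [t,l] [f l, t]) \<Longrightarrow> aeq (t # B) (map f B @ [t])"
proof (induction B)
  case Nil then show ?case by simp
next
  case (Cons l B)
  have "aeq ([] @ [t,l] @ B) ([] @ [f l, t] @ B)" by (rule aeq_ctx) (use Cons in auto)
  moreover have "aeq ([f l] @ (t # B) @ []) ([f l] @ (map f B @ [t]) @ [])"
    by (rule aeq_ctx) (use Cons in auto)
  ultimately show ?case by (auto intro: aeq_trans)
qed

lemma aeq_pass_ctx: "(\<And>l. l \<in> set B \<Longrightarrow> aeq [t,l] [f l, t]) \<Longrightarrow> aeq (p @ t # B @ q) (p @ map f B @ t # q)"
  using aeq_ctx[OF aeq_pass, of B t f p q] by simp

lemma flip_steps: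
  "l \<in> {X1,X2} \<Longrightarrow> aeq [Y1,l] [flipx l, Y1]" "l \<in> {X1,X2} \<Longrightarrow> aeq [Y2,l] [flipx l, Y2]"
  "l \<in> {X1,X2} \<Longrightarrow> aeq [Z1,l] [flipx l, Z1]" "l \<in> {X1,X2} \<Longrightarrow> aeq [Z2,l] [flipx l, Z2]"
  using aeq_steps by auto

lemma x_comm: "aeq (p @ replicate a X2 @ replicate b X1 @ q) (p @ replicate b X1 @ replicate a X2 @ q)"
proof (induction a arbitrary: p)
  case 0 then show ?case by simp
next
  case (Suc a)
  have "aeq ((p @ [X2]) @ replicate a X2 @ replicate b X1 @ q) ((p @ [X2]) @ replicate b X1 @ replicate a X2 @ q)"
    by (rule Suc)
  moreover have "aeq (p @ X2 # replicate b X1 @ (replicate a X2 @ q)) (p @ map id (replicate b X1) @ X2 # (replicate a X2 @ q))"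
    by (rule aeq_pass_ctx) (use aeq_steps in auto)
  ultimately show ?case by (auto intro: aeq_trans simp: replicate_app_Cons_same)
qed

end

context BB begin

lemmas aeq_trans' [trans] = aeq_trans

abbreviation "RP n t \<equiv> replicate n t"

lemma flip_block: "l \<in> set (RP a X1 @ RP b X2) \<Longrightarrow> aeq [t,l] [flipx l, t]" if "t \<in> {Y1,Y2,Z1,Z2}"
  using that flip_steps by auto

lemma ins_X1: "aeq (X1 # word v) (word (ins X1 v))"
  by (simp add: word_def ins_def)

lemma ins_X2: "aeq (X2 # word v) (word (ins X2 v))"
proof -
  have "aeq ([] @ X2 # RP (v X1) X1 @ (RP (v X2) X2 @ RP (v Y1) Y1 @ RP (v Y2) Y2 @ RP (v Z1) Z1 @ RP (v Z2) Z2))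
            ([] @ map id (RP (v X1) X1) @ X2 # (RP (v X2) X2 @ RP (v Y1) Y1 @ RP (v Y2) Y2 @ RP (v Z1) Z1 @ RP (v Z2) Z2))"
    by (rule aeq_pass_ctx) (use aeq_steps in auto)
  then show ?thesis by (simp add: word_def ins_def replicate_app_Cons_same)
qed

lemma ins_Y1: "aeq (Y1 # word v) (word (ins Y1 v))"
proof -
  have A: "aeq ([] @ Y1 # (RP (v X1) X1 @ RP (v X2) X2) @ (RP (v Y1) Y1 @ RP (v Y2) Y2 @ RP (v Z1) Z1 @ RP (v Z2) Z2))
            ([] @ map flipx (RP (v X1) X1 @ RP (v X2) X2) @ Y1 # (RP (v Y1) Y1 @ RP (v Y2) Y2 @ RP (v Z1) Z1 @ RP (v Z2) Z2))"
    by (rule aeq_pass_ctx) (rule flip_block, auto)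
  have B: "aeq ([] @ RP (v X1) X2 @ RP (v X2) X1 @ (Y1 # RP (v Y1) Y1 @ RP (v Y2) Y2 @ RP (v Z1) Z1 @ RP (v Z2) Z2))
     ([] @ RP (v X2) X1 @ RP (v X1) X2 @ (Y1 # RP (v Y1) Y1 @ RP (v Y2) Y2 @ RP (v Z1) Z1 @ RP (v Z2) Z2))"
    by (rule x_comm)
  have A': "aeq (Y1 # word v) (RP (v X1) X2 @ RP (v X2) X1 @ (Y1 # RP (v Y1) Y1 @ RP (v Y2) Y2 @ RP (v Z1) Z1 @ RP (v Z2) Z2))"
    using A by (simp add: word_def)
  have B': "aeq (RP (v X1) X2 @ RP (v X2) X1 @ (Y1 # RP (v Y1) Y1 @ RP (v Y2) Y2 @ RP (v Z1) Z1 @ RP (v Z2) Z2)) (word (ins Y1 v))"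
    using B by (simp add: word_def ins_def swx_def)
  show ?thesis by (rule aeq_trans[OF A' B'])
qed

lemma ins_Y2: "aeq (Y2 # word v) (word (ins Y2 v))"
proof -
  have A: "aeq ([] @ Y2 # (RP (v X1) X1 @ RP (v X2) X2) @ (RP (v Y1) Y1 @ RP (v Y2) Y2 @ RP (v Z1) Z1 @ RP (v Z2) Z2))
            ([] @ map flipx (RP (v X1) X1 @ RP (v X2) X2) @ Y2 # (RP (v Y1) Y1 @ RP (v Y2) Y2 @ RP (v Z1) Z1 @ RP (v Z2) Z2))"
    by (rule aeq_pass_ctx) (rule flip_block, auto)
  have A': "aeq (Y2 # word v) (RP (v X1) X2 @ RP (v X2) X1 @ Y2 # (RP (v Y1) Y1 @ RP (v Y2) Y2 @ RP (v Z1) Z1 @ RP (v Z2) Z2))"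
    using A by (simp add: word_def)
  have C: "aeq ((RP (v X1) X2 @ RP (v X2) X1) @ Y2 # (RP (v Y1) Y1) @ (RP (v Y2) Y2 @ RP (v Z1) Z1 @ RP (v Z2) Z2))
            ((RP (v X1) X2 @ RP (v X2) X1) @ map id (RP (v Y1) Y1) @ Y2 # (RP (v Y2) Y2 @ RP (v Z1) Z1 @ RP (v Z2) Z2))"
    by (rule aeq_pass_ctx) (use aeq_steps in auto)
  have C': "aeq (RP (v X1) X2 @ RP (v X2) X1 @ Y2 # (RP (v Y1) Y1 @ RP (v Y2) Y2 @ RP (v Z1) Z1 @ RP (v Z2) Z2)) (RP (v X1) X2 @ RP (v X2) X1 @ RP (v Y1) Y1 @ Y2 # RP (v Y2) Y2 @ RP (v Z1) Z1 @ RP (v Z2) Z2)"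
    using C by simp
  have B: "aeq ([] @ RP (v X1) X2 @ RP (v X2) X1 @ (RP (v Y1) Y1 @ Y2 # RP (v Y2) Y2 @ RP (v Z1) Z1 @ RP (v Z2) Z2))
     ([] @ RP (v X2) X1 @ RP (v X1) X2 @ (RP (v Y1) Y1 @ Y2 # RP (v Y2) Y2 @ RP (v Z1) Z1 @ RP (v Z2) Z2))"
    by (rule x_comm)
  have B': "aeq (RP (v X1) X2 @ RP (v X2) X1 @ RP (v Y1) Y1 @ Y2 # RP (v Y2) Y2 @ RP (v Z1) Z1 @ RP (v Z2) Z2) (word (ins Y2 v))"
    using B by (simp add: word_def ins_def swx_def replicate_app_Cons_same)
  show ?thesis by (rule aeq_trans[OF A' aeq_trans[OF C' B']])
qed

lemma ins_Z1: "aeq (Z1 # word v) (word (ins Z1 v))"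
proof -
  have A: "aeq ([] @ Z1 # (RP (v X1) X1 @ RP (v X2) X2) @ (RP (v Y1) Y1 @ RP (v Y2) Y2 @ RP (v Z1) Z1 @ RP (v Z2) Z2))
            ([] @ map flipx (RP (v X1) X1 @ RP (v X2) X2) @ Z1 # (RP (v Y1) Y1 @ RP (v Y2) Y2 @ RP (v Z1) Z1 @ RP (v Z2) Z2))"
    by (rule aeq_pass_ctx) (rule flip_block, auto)
  have A': "aeq (Z1 # word v) (RP (v X1) X2 @ RP (v X2) X1 @ Z1 # (RP (v Y1) Y1 @ RP (v Y2) Y2 @ RP (v Z1) Z1 @ RP (v Z2) Z2))"
    using A by (simp add: word_def)
  have C: "aeq ((RP (v X1) X2 @ RP (v X2) X1) @ Z1 # (RP (v Y1) Y1 @ RP (v Y2) Y2) @ (RP (v Z1) Z1 @ RP (v Z2) Z2))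
            ((RP (v X1) X2 @ RP (v X2) X1) @ map id (RP (v Y1) Y1 @ RP (v Y2) Y2) @ Z1 # (RP (v Z1) Z1 @ RP (v Z2) Z2))"
    by (rule aeq_pass_ctx) (use aeq_steps in auto)
  have C': "aeq (RP (v X1) X2 @ RP (v X2) X1 @ Z1 # (RP (v Y1) Y1 @ RP (v Y2) Y2 @ RP (v Z1) Z1 @ RP (v Z2) Z2)) (RP (v X1) X2 @ RP (v X2) X1 @ RP (v Y1) Y1 @ RP (v Y2) Y2 @ Z1 # RP (v Z1) Z1 @ RP (v Z2) Z2)"
    using C by simp
  have B: "aeq ([] @ RP (v X1) X2 @ RP (v X2) X1 @ (RP (v Y1) Y1 @ RP (v Y2) Y2 @ Z1 # RP (v Z1) Z1 @ RP (v Z2) Z2))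
     ([] @ RP (v X2) X1 @ RP (v X1) X2 @ (RP (v Y1) Y1 @ RP (v Y2) Y2 @ Z1 # RP (v Z1) Z1 @ RP (v Z2) Z2))"
    by (rule x_comm)
  have B': "aeq (RP (v X1) X2 @ RP (v X2) X1 @ RP (v Y1) Y1 @ RP (v Y2) Y2 @ Z1 # RP (v Z1) Z1 @ RP (v Z2) Z2) (word (ins Z1 v))"
    using B by (simp add: word_def ins_def swx_def replicate_app_Cons_same)
  show ?thesis by (rule aeq_trans[OF A' aeq_trans[OF C' B']])
qed

lemma ins_Z2: "aeq (Z2 # word v) (word (ins Z2 v))"
proof -
  have A: "aeq ([] @ Z2 # (RP (v X1) X1 @ RP (v X2) X2) @ (RP (v Y1) Y1 @ RP (v Y2) Y2 @ RP (v Z1) Z1 @ RP (v Z2) Z2))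
            ([] @ map flipx (RP (v X1) X1 @ RP (v X2) X2) @ Z2 # (RP (v Y1) Y1 @ RP (v Y2) Y2 @ RP (v Z1) Z1 @ RP (v Z2) Z2))"
    by (rule aeq_pass_ctx) (rule flip_block, auto)
  have A': "aeq (Z2 # word v) (RP (v X1) X2 @ RP (v X2) X1 @ Z2 # (RP (v Y1) Y1 @ RP (v Y2) Y2 @ RP (v Z1) Z1 @ RP (v Z2) Z2))"
    using A by (simp add: word_def)
  have C: "aeq ((RP (v X1) X2 @ RP (v X2) X1) @ Z2 # (RP (v Y1) Y1 @ RP (v Y2) Y2 @ RP (v Z1) Z1) @ (RP (v Z2) Z2))
            ((RP (v X1) X2 @ RP (v X2) X1) @ map id (RP (v Y1) Y1 @ RP (v Y2) Y2 @ RP (v Z1) Z1) @ Z2 # (RP (v Z2) Z2))"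
    by (rule aeq_pass_ctx) (use aeq_steps in auto)
  have C': "aeq (RP (v X1) X2 @ RP (v X2) X1 @ Z2 # (RP (v Y1) Y1 @ RP (v Y2) Y2 @ RP (v Z1) Z1 @ RP (v Z2) Z2)) (RP (v X1) X2 @ RP (v X2) X1 @ RP (v Y1) Y1 @ RP (v Y2) Y2 @ RP (v Z1) Z1 @ Z2 # RP (v Z2) Z2)"
    using C by simp
  have B: "aeq ([] @ RP (v X1) X2 @ RP (v X2) X1 @ (RP (v Y1) Y1 @ RP (v Y2) Y2 @ RP (v Z1) Z1 @ Z2 # RP (v Z2) Z2))
     ([] @ RP (v X2) X1 @ RP (v X1) X2 @ (RP (v Y1) Y1 @ RP (v Y2) Y2 @ RP (v Z1) Z1 @ Z2 # RP (v Z2) Z2))"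
    by (rule x_comm)
  have B': "aeq (RP (v X1) X2 @ RP (v X2) X1 @ RP (v Y1) Y1 @ RP (v Y2) Y2 @ RP (v Z1) Z1 @ Z2 # RP (v Z2) Z2) (word (ins Z2 v))"
    using B by (simp add: word_def ins_def swx_def replicate_app_Cons_same)
  show ?thesis by (rule aeq_trans[OF A' aeq_trans[OF C' B']])
qed

lemma ins_aeq: "aeq (t # word v) (word (ins t v))"
  by (cases t) (simp_all add: ins_X1 ins_X2 ins_Y1 ins_Y2 ins_Z1 ins_Z2)

lemma nf_aeq: "aeq w (word (nf w))"
proof (induction w)
  case Nil then show ?case by (simp add: nf_def word_def)
next
  case (Cons t w)
  have "aeq ([t] @ w @ []) ([t] @ word (nf w) @ [])" by (rule aeq_ctx[OF Cons])
  then have "aeq (t # w) (t # word (nf w))" by simp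
  moreover have "word (nf (t # w)) = word (ins t (nf w))" by (simp add: nf_def)
  ultimately show ?case using ins_aeq aeq_trans by metis
qed

end

definition vlen :: "vec \<Rightarrow> nat" where "vlen v = v X1 + v X2 + v Y1 + v Y2 + v Z1 + v Z2"
definition yzc :: "vec \<Rightarrow> nat" where "yzc v = v Y1 + v Y2 + v Z1 + v Z2"
definition par :: "nat \<Rightarrow> vec \<Rightarrow> vec" where "par n v = (if even n then v else swx v)"
definition vadd :: "vec \<Rightarrow> vec \<Rightarrow> vec" where "vadd u v = (\<lambda>g. u g + v g)"

lemma length_word: "length (word v) = vlen v"
  by (simp add: word_def vlen_def)

lemma vlen_ins: "vlen (ins t v) = Suc (vlen v)"
  by (cases t) (simp_all add: vlen_def ins_def swx_def)

lemma vlen_nf: "vlen (nf w) = length w"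
  by (induction w) (simp_all add: nf_def vlen_ins, simp add: vlen_def)

fun isyz :: "gen \<Rightarrow> bool" where
  "isyz X1 = False" | "isyz X2 = False" | "isyz t = True"

lemma fst_gmul_par: "x \<in> Grp \<Longrightarrow> y \<in> Grp \<Longrightarrow> even (fst (gmul x y)) \<longleftrightarrow> (even (fst x) \<longleftrightarrow> even (fst y))"
  unfolding Grp_eq by (auto simp: gmul_def)

lemma wgrade_par: "even (fst (wgrade w)) \<longleftrightarrow> even (length (filter isyz w))"
proof (induction w)
  case Nil then show ?case by (simp add: ge_def)
next
  case (Cons t w)
  have "even (fst (grade t)) \<longleftrightarrow> \<not> isyz t"
    by (cases t) (simp_all add: gmul_def gs_def gr_def)
  then show ?case using Cons by (cases "isyz t") (simp_all add: fst_gmul_par)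
qed

lemma filter_word: "length (filter isyz (word v)) = yzc v"
  by (simp add: word_def yzc_def)

lemma grade_yzc: "wgrade (word v) = ge \<Longrightarrow> even (yzc v)"
  using wgrade_par[of "word v"] by (simp add: filter_word ge_def)

lemma foldr_rep_x: "t = X1 \<or> t = X2 \<Longrightarrow> foldr ins (replicate n t) v = v(t := v t + n)"
  by (induction n) (auto simp: ins_def fun_eq_iff)

lemma swx_upd: "t \<noteq> X1 \<Longrightarrow> t \<noteq> X2 \<Longrightarrow> swx (v(t := a)) = (swx v)(t := a)"
  by (auto simp: swx_def fun_eq_iff)

lemma swx_swx[simp]: "swx (swx v) = v"
  by (auto simp: swx_def fun_eq_iff)

lemma par_Suc: "par (Suc n) v = swx (par n v)"
  by (simp add: par_def)

lemma foldr_rep_yz: "t \<noteq> X1 \<Longrightarrow> t \<noteq> X2 \<Longrightarrow> foldr ins (replicate n t) v = (par n v)(t := v t + n)"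
proof (induction n)
  case 0 then show ?case by (simp add: par_def)
next
  case (Suc n)
  then show ?case
    by (cases t) (auto simp: ins_def par_Suc swx_upd fun_eq_iff, auto simp: swx_def par_def)
qed

lemma par_upd: "t \<noteq> X1 \<Longrightarrow> t \<noteq> X2 \<Longrightarrow> par n (v(t := a)) = (par n v)(t := a)"
  by (simp add: par_def swx_upd)

lemma par_add: "par m (par n v) = par (m + n) v"
  by (simp add: par_def)

lemma par_apply_yz: "t \<noteq> X1 \<Longrightarrow> t \<noteq> X2 \<Longrightarrow> par n v t = v t"
  by (simp add: par_def swx_def)

lemma foldr_word: "foldr ins (word u) v = vadd u (par (yzc u) v)"
proof -
  have "foldr ins (word u) v =
    foldr ins (replicate (u X1) X1) (foldr ins (replicate (u X2) X2) (foldr ins (replicate (u Y1) Y1)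
    (foldr ins (replicate (u Y2) Y2) (foldr ins (replicate (u Z1) Z1) (foldr ins (replicate (u Z2) Z2) v)))))"
    by (simp only: word_def foldr_append comp_def)
  also have "\<dots> = vadd u (par (yzc u) v)"
    apply (simp only: foldr_rep_x[of X1] foldr_rep_x[of X2] foldr_rep_yz[of Y1] foldr_rep_yz[of Y2]
       foldr_rep_yz[of Z1] foldr_rep_yz[of Z2] simp_thms gen.distinct)
    by (auto simp: vadd_def yzc_def fun_eq_iff par_def swx_def split: gen.split; metis gen.exhaust)
  finally show ?thesis .
qed

lemma nf_append_word: "nf (word u @ w) = vadd u (par (yzc u) (nf w))"
  by (simp add: nf_def foldr_word)

lemma nf_word: "nf (word u) = u"
  using nf_append_word[of u "[]"] by (simp add: nf_def vadd_def par_def swx_def fun_eq_iff)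

lemma nf_append_even: "even (yzc u) \<Longrightarrow> nf (word u @ word m) = vadd u m"
  by (simp add: nf_append_word nf_word par_def)

lemma Rey_mon_homog: "homog (length w) (Rey (mon w))"
  unfolding homog_def
proof (intro allI impI)
  fix x assume "Rey (mon w) x \<noteq> 0"
  then obtain g where "act_g g (mon w) x \<noteq> 0"
    unfolding Rey_def psmul_def by (auto elim: sum.not_neutral_contains_not_neutral)
  then show "length x = length w"
    by (simp only: act_g_Mg[OF mon_FA] act_mon) (auto simp: psmul_def mon_def split: if_splits)
qed

context BB begin

definition SS :: "fpoly set" where
  "SS = {h. h \<in> FA \<and> Binv RR h \<and> (\<exists>d\<le>14. homog d h)}"

definition good :: "fpoly \<Rightarrow> bool" where
  "good F \<longleftrightarrow> (\<exists>h\<in>subalg SS. cg F h)"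

lemma subalg_FA: "h \<in> subalg SS \<Longrightarrow> h \<in> FA"
  by (induction rule: subalg.induct) (auto simp: SS_def)

lemma Rey_mon_Binv: assumes "wgrade w = ge" shows "Binv RR (Rey (mon w))"
proof -
  have p: "proj_e (Rey (mon w)) = Rey (mon w)"
    using assms by (simp add: Rey_proj proj_mon)
  have z: "psub F F = (\<lambda>_. 0)" for F by (simp add: psub_def fun_eq_iff)
  show ?thesis unfolding Binv_def
    by (simp add: p z Rey_inv ideal_gen.zero)
qed

lemma Rey_mon_SS: "wgrade w = ge \<Longrightarrow> length w \<le> 14 \<Longrightarrow> Rey (mon w) \<in> SS"
  unfolding SS_def using Rey_mon_Binv Rey_mon_homog by auto

lemma good_SS: "h \<in> SS \<Longrightarrow> good h"
  unfolding good_def using cong_refl[OF RR_FA] by (intro bexI[of _ h] subalg.base) auto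

lemma good_cg: "cg F G \<Longrightarrow> good G \<Longrightarrow> good F"
  unfolding good_def using cong_trans[OF RR_FA] by blast

lemma good_padd: "good F \<Longrightarrow> good G \<Longrightarrow> good (padd F G)"
  unfolding good_def using cong_padd[OF RR_FA] subalg.add by blast

lemma good_psmul: "good F \<Longrightarrow> good (psmul c F)"
  unfolding good_def using cong_psmul[OF RR_FA] subalg.smul by blast

lemma good_pmul: "F \<in> FA \<Longrightarrow> G \<in> FA \<Longrightarrow> good F \<Longrightarrow> good G \<Longrightarrow> good (pmul F G)"
  unfolding good_def using cong_pmul[OF RR_FA] subalg.mul subalg_FA by metis

lemma good_zero: "good (\<lambda>_. 0)"
proof -
  have "mon [] \<in> subalg SS" by (rule subalg.one)
  then have "psmul 0 (mon []) \<in> subalg SS" by (rule subalg.smul)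
  moreover have "psmul 0 (mon []) = (\<lambda>_. 0)" by (simp add: psmul_def)
  ultimately show ?thesis unfolding good_def using cong_refl[OF RR_FA] by metis
qed

lemma good_sum: "finite I \<Longrightarrow> (\<And>i. i \<in> I \<Longrightarrow> good (F i)) \<Longrightarrow> good (\<lambda>w. \<Sum>i\<in>I. F i w)"
proof (induction rule: finite_induct)
  case empty then show ?case by (simp add: good_zero)
next
  case (insert x I)
  have "(\<lambda>w. \<Sum>i\<in>insert x I. F i w) = padd (F x) (\<lambda>w. \<Sum>i\<in>I. F i w)"
    using insert by (simp add: padd_def fun_eq_iff)
  then show ?case using insert by (simp add: good_padd)
qed

end

lemma sum_Grp: "(\<Sum>g\<in>Grp. f g) = f (0,0) + f (1,0) + f (2,0) + f (3,0) + f (0,1) + f (1,1) + f (2,1) + f (3,1)"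
  unfolding Grp_eq by (simp add: add.assoc)

lemma Rey_mon_expand: "Rey (mon w) = psmul (1/8) (\<lambda>x.
   act_poly (Mt (0,0)) (mon w) x + act_poly (Mt (1,0)) (mon w) x + act_poly (Mt (2,0)) (mon w) x + act_poly (Mt (3,0)) (mon w) x
 + act_poly (Mt (0,1)) (mon w) x + act_poly (Mt (1,1)) (mon w) x + act_poly (Mt (2,1)) (mon w) x + act_poly (Mt (3,1)) (mon w) x)"
proof -
  have "act_g g (mon w) = act_poly (Mt g) (mon w)" if "g \<in> Grp" for g using that by (simp add: act_g_Mt)
  then have "(\<lambda>x. \<Sum>g\<in>Grp. act_g g (mon w) x) = (\<lambda>x. \<Sum>g\<in>Grp. act_poly (Mt g) (mon w) x)" by simp
  then show ?thesis unfolding Rey_def by (simp add: sum_Grp)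
qed

lemma Rey_YY: "Rey (mon [Y1,Y2]) = psmul (1/2) (padd (mon [Y1,Y2]) (psmul 1 (mon [Y2,Y1])))"
  unfolding Rey_mon_expand act_mon by (simp add: Mt_def psmul_def padd_def mon_def fun_eq_iff)

lemma Rey_ZZ: "Rey (mon [Z1,Z2]) = psmul (1/2) (padd (mon [Z1,Z2]) (psmul (-1) (mon [Z2,Z1])))"
  unfolding Rey_mon_expand act_mon by (simp add: Mt_def psmul_def padd_def mon_def fun_eq_iff)

lemma Rey_XX: "Rey (mon [X1,X1,X2,X2]) = psmul (1/2) (padd (mon [X1,X1,X2,X2]) (psmul 1 (mon [X2,X2,X1,X1])))"
  unfolding Rey_mon_expand act_mon by (simp add: Mt_def psmul_def padd_def mon_def fun_eq_iff)

lemma Rey_P_X1: "Rey (mon [X1,X1,X1,X1]) = psmul (1/2) (padd (mon [X1,X1,X1,X1]) (psmul 1 (mon [X2,X2,X2,X2])))"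
  unfolding Rey_mon_expand act_mon by (simp add: Mt_def psmul_def padd_def mon_def fun_eq_iff)

lemma Rey_P_X2: "Rey (mon [X2,X2,X2,X2]) = psmul (1/2) (padd (mon [X2,X2,X2,X2]) (psmul 1 (mon [X1,X1,X1,X1])))"
  unfolding Rey_mon_expand act_mon by (simp add: Mt_def psmul_def padd_def mon_def fun_eq_iff)

lemma Rey_P_Y1: "Rey (mon [Y1,Y1,Y1,Y1]) = psmul (1/2) (padd (mon [Y1,Y1,Y1,Y1]) (psmul 1 (mon [Y2,Y2,Y2,Y2])))"
  unfolding Rey_mon_expand act_mon by (simp add: Mt_def psmul_def padd_def mon_def fun_eq_iff)

lemma Rey_P_Y2: "Rey (mon [Y2,Y2,Y2,Y2]) = psmul (1/2) (padd (mon [Y2,Y2,Y2,Y2]) (psmul 1 (mon [Y1,Y1,Y1,Y1])))"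
  unfolding Rey_mon_expand act_mon by (simp add: Mt_def psmul_def padd_def mon_def fun_eq_iff)

lemma Rey_P_Z1: "Rey (mon [Z1,Z1,Z1,Z1]) = psmul (1/2) (padd (mon [Z1,Z1,Z1,Z1]) (psmul 1 (mon [Z2,Z2,Z2,Z2])))"
  unfolding Rey_mon_expand act_mon by (simp add: Mt_def psmul_def padd_def mon_def fun_eq_iff)

lemma Rey_P_Z2: "Rey (mon [Z2,Z2,Z2,Z2]) = psmul (1/2) (padd (mon [Z2,Z2,Z2,Z2]) (psmul 1 (mon [Z1,Z1,Z1,Z1])))"
  unfolding Rey_mon_expand act_mon by (simp add: Mt_def psmul_def padd_def mon_def fun_eq_iff)

context BB begin

lemma good_Rey_aeq: "aeq w w' \<Longrightarrow> good (Rey (mon w)) \<Longrightarrow> good (Rey (mon w'))"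
proof -
  assume a: "aeq w w'" and g: "good (Rey (mon w))"
  from aeq_sym[OF a] obtain k where k: "k \<noteq> 0" "cg (mon w') (psmul k (mon w))" by (auto simp: aeq_def)
  have "cg (Rey (mon w')) (Rey (psmul k (mon w)))" using k by (intro Rey_cg) auto
  then have "cg (Rey (mon w')) (psmul k (Rey (mon w)))" by (simp add: Rey_psmul)
  then show ?thesis using g good_cg good_psmul by blast
qed

lemma prod_formula:
  assumes G: "Rey (mon a) = psmul (1/2) (padd (mon a) (psmul c (mon b)))"
  shows "pmul (Rey (mon x)) (Rey (mon a)) = psmul (1/2) (padd (Rey (mon (x@a))) (psmul c (Rey (mon (x@b)))))"
proof -
  have "pmul (Rey (mon x)) (Rey (mon a)) = Rey (pmul (mon x) (Rey (mon a)))"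
    by (rule Rey_mul[symmetric]) (auto simp: Rey_inv)
  also have "pmul (mon x) (Rey (mon a)) = psmul (1/2) (padd (mon (x@a)) (psmul c (mon (x@b))))"
    unfolding G by (simp add: pmul_psmul_right pmul_padd_right pmul_mon_mon)
  finally show ?thesis by (simp add: Rey_psmul Rey_padd)
qed

lemma vsub_parts:
  assumes le: "\<And>t. m t \<le> v t"
  shows "vadd (\<lambda>t. v t - m t) m = v" "yzc v = yzc (\<lambda>t. v t - m t) + yzc m"
    "vlen v = vlen (\<lambda>t. v t - m t) + vlen m"
proof -
  show "vadd (\<lambda>t. v t - m t) m = v" unfolding vadd_def fun_eq_iff
    using le by (simp add: le_add_diff_inverse2)
  show "yzc v = yzc (\<lambda>t. v t - m t) + yzc m"
    using le[of Y1] le[of Y2] le[of Z1] le[of Z2] unfolding yzc_def by linarith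
  show "vlen v = vlen (\<lambda>t. v t - m t) + vlen m"
    using le[of X1] le[of X2] le[of Y1] le[of Y2] le[of Z1] le[of Z2] unfolding vlen_def by linarith
qed

lemma split_facts:
  assumes le: "\<And>t. m t \<le> v t" and gv: "wgrade (word v) = ge" and em: "even (yzc m)" and gm: "wgrade (word m) = ge"
  shows "aeq (word (\<lambda>t. v t - m t) @ word m) (word v)" "wgrade (word (\<lambda>t. v t - m t)) = ge"
    "even (yzc (\<lambda>t. v t - m t))"
proof -
  let ?v2 = "\<lambda>t. v t - m t"
  note p = vsub_parts[OF le]
  show ev: "even (yzc ?v2)" using grade_yzc[OF gv] em p(2) by auto
  have "nf (word ?v2 @ word m) = v" using nf_append_even[OF ev] p(1) by simp
  then show a: "aeq (word ?v2 @ word m) (word v)" using nf_aeq[of "word ?v2 @ word m"] by simp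
  then have "wgrade (word ?v2 @ word m) = ge" using gv by (simp add: aeq_def)
  then show "wgrade (word ?v2) = ge" using gm by (simp add: wgrade_append)
qed

lemma typeI_gen:
  assumes IH: "\<And>v'. vlen v' < vlen v \<Longrightarrow> wgrade (word v') = ge \<Longrightarrow> good (Rey (mon (word v')))"
    and gv: "wgrade (word v) = ge" and le: "\<And>t. m t \<le> v t" and em: "even (yzc m)"
    and gm: "wgrade (word m) = ge" and pos: "0 < vlen m" and small: "vlen m \<le> 14"
    and G: "Rey (mon (word m)) = psmul (1/2) (padd (mon (word m)) (psmul c (mon b)))"
    and cb: "cg (psmul c (mon b)) (mon (word m))"
  shows "good (Rey (mon (word v)))"
proof -
  let ?v2 = "\<lambda>t. v t - m t" and ?x = "word (\<lambda>t. v t - m t)"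
  note sf = split_facts[OF le gv em gm]
  have "vlen ?v2 < vlen v" using vsub_parts(3)[OF le] pos by simp
  then have g2: "good (Rey (mon ?x))" using IH sf by auto
  have gm': "good (Rey (mon (word m)))" using gm small by (intro good_SS Rey_mon_SS) (auto simp: length_word)
  have P: "good (pmul (Rey (mon ?x)) (Rey (mon (word m))))" using g2 gm' by (intro good_pmul) auto
  let ?A = "Rey (mon (?x @ word m))" and ?B = "Rey (mon (?x @ b))"
  have "cg (pmul (mon ?x) (psmul c (mon b))) (pmul (mon ?x) (mon (word m)))"
    using cb by (intro cong_pmul[OF RR_FA] cong_refl[OF RR_FA]) auto
  then have "cg (psmul c (mon (?x @ b))) (mon (?x @ word m))" by (simp add: pmul_psmul_right pmul_mon_mon)
  then have "cg (Rey (psmul c (mon (?x @ b)))) ?A" by (intro Rey_cg) auto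
  then have cB: "cg (psmul c ?B) ?A" by (simp add: Rey_psmul)
  have "cg (psmul (1/2) (padd ?A (psmul c ?B))) (psmul (1/2) (padd ?A ?A))"
    using cB by (intro cong_psmul[OF RR_FA] cong_padd[OF RR_FA] cong_refl[OF RR_FA])
  moreover have "psmul (1/2) (padd ?A ?A) = ?A" by (simp add: psmul_def padd_def fun_eq_iff)
  ultimately have "cg (pmul (Rey (mon ?x)) (Rey (mon (word m)))) ?A" using prod_formula[OF G, of ?x] by simp
  then have "good ?A" using P cong_sym[OF RR_FA] good_cg by blast
  then show ?thesis using good_Rey_aeq[OF sf(1)] by simp
qed

lemma pure_gen:
  assumes IH: "\<And>v'. vlen v' < vlen v \<Longrightarrow> wgrade (word v') = ge \<Longrightarrow> good (Rey (mon (word v')))"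
    and gv: "wgrade (word v) = ge" and le: "\<And>t. p t \<le> v t" and ep: "even (yzc p)"
    and gp: "wgrade (word p) = ge" and pos: "0 < vlen p" and small: "vlen p \<le> 14"
    and G: "Rey (mon (word p)) = psmul (1/2) (padd (mon (word p)) (psmul c (mon (word p'))))"
    and gp': "wgrade (word p') = ge" and lp: "vlen p' = vlen p"
    and H: "wgrade (word (vadd (\<lambda>t. v t - p t) p')) = ge \<Longrightarrow> vlen (vadd (\<lambda>t. v t - p t) p') = vlen v \<Longrightarrow>
      good (Rey (mon (word (vadd (\<lambda>t. v t - p t) p'))))"
  shows "good (Rey (mon (word v)))"
proof -
  let ?v2 = "\<lambda>t. v t - p t" and ?x = "word (\<lambda>t. v t - p t)"
  note sf = split_facts[OF le gv ep gp]
  have "vlen ?v2 < vlen v" using vsub_parts(3)[OF le] pos by simp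
  then have g2: "good (Rey (mon ?x))" using IH sf by auto
  have gm': "good (Rey (mon (word p)))" using gp small by (intro good_SS Rey_mon_SS) (auto simp: length_word)
  have P: "good (pmul (Rey (mon ?x)) (Rey (mon (word p))))" using g2 gm' by (intro good_pmul) auto
  let ?A = "Rey (mon (?x @ word p))" and ?B = "Rey (mon (?x @ word p'))"
  have ae: "aeq (word (vadd ?v2 p')) (?x @ word p')"
    using nf_aeq[of "?x @ word p'"] nf_append_even[OF sf(3)] by (simp add: aeq_sym)
  have "wgrade (word (vadd ?v2 p')) = ge"
    using ae sf(2) gp' by (simp add: aeq_def wgrade_append)
  moreover have "vlen (vadd ?v2 p') = vlen v"
  proof -
    have lv: "vlen v = vlen ?v2 + vlen p" by (rule vsub_parts(3)[OF le])
    have "vlen (vadd ?v2 p') = vlen ?v2 + vlen p'" by (simp add: vlen_def vadd_def)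
    then show ?thesis using lv lp by simp
  qed
  ultimately have gB: "good ?B" using H good_Rey_aeq[OF ae] by blast
  have "?A = padd (psmul 2 (pmul (Rey (mon ?x)) (Rey (mon (word p))))) (psmul (-c) ?B)"
    unfolding prod_formula[OF G] by (simp add: psmul_def padd_def fun_eq_iff field_simps)
  then have "good ?A" using P gB by (simp add: good_padd good_psmul)
  then show ?thesis using good_Rey_aeq[OF sf(1)] by simp
qed

end

context BB begin

lemma cg_rel_ctx: assumes "rel c1 a b c2 d e \<in> RR"
  shows "cg (psmul c1 (mon (p@[a,b]@q))) (psmul (-c2) (mon (p@[d,e]@q)))"
proof -
  have "pmul (mon p) (pmul (rel c1 a b c2 d e) (mon q)) \<in> JJ"
    using assms unfolding JJ_def by (rule ideal_gen.gen)
  moreover have "pmul (mon p) (pmul (rel c1 a b c2 d e) (mon q)) =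
     psub (psmul c1 (mon (p@[a,b]@q))) (psmul (-c2) (mon (p@[d,e]@q)))"
    unfolding rel_def
    by (simp add: pmul_padd_left pmul_padd_right pmul_psmul_left pmul_psmul_right pmul_mon_mon)
       (simp add: psub_def padd_def psmul_def fun_eq_iff)
  ultimately show ?thesis by (simp add: cg_def')
qed

lemma psmul_one[simp]: "psmul 1 f = f" by (simp add: psmul_def)

lemma cg_xcomm: "cg (mon (p@[X2,X1]@q)) (mon (p@[X1,X2]@q))"
proof -
  have "cg (psmul 1 (mon (p@[X1,X2]@q))) (psmul (-(-1)) (mon (p@[X2,X1]@q)))"
    by (rule cg_rel_ctx) (simp add: RR_def Brels_def)
  then show ?thesis by (simp add: cong_sym[OF RR_FA])
qed

lemma cYY: "cg (mon [Y2,Y1]) (mon [Y1,Y2])"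
proof -
  have "cg (psmul 1 (mon ([]@[Y1,Y2]@[]))) (psmul (-(-1)) (mon ([]@[Y2,Y1]@[])))"
    by (rule cg_rel_ctx) (simp add: RR_def Brels_def)
  then show ?thesis by (simp add: cong_sym[OF RR_FA])
qed

lemma cZZ: "cg (psmul (-1) (mon [Z2,Z1])) (mon [Z1,Z2])"
proof -
  have "cg (psmul 1 (mon ([]@[Z1,Z2]@[]))) (psmul (-1) (mon ([]@[Z2,Z1]@[])))"
    by (rule cg_rel_ctx) (simp add: RR_def Brels_def)
  then show ?thesis by (simp add: cong_sym[OF RR_FA])
qed

lemma cXX: "cg (mon [X2,X2,X1,X1]) (mon [X1,X1,X2,X2])"
proof -
  have 1: "cg (mon [X2,X2,X1,X1]) (mon [X2,X1,X2,X1])" using cg_xcomm[of "[X2]" "[X1]"] by simp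
  have 2: "cg (mon [X2,X1,X2,X1]) (mon [X1,X2,X2,X1])" using cg_xcomm[of "[]" "[X2,X1]"] by simp
  have 3: "cg (mon [X1,X2,X2,X1]) (mon [X1,X2,X1,X2])" using cg_xcomm[of "[X1,X2]" "[]"] by simp
  have 4: "cg (mon [X1,X2,X1,X2]) (mon [X1,X1,X2,X2])" using cg_xcomm[of "[X1]" "[X2]"] by simp
  show ?thesis by (rule cong_trans[OF RR_FA 1 cong_trans[OF RR_FA 2 cong_trans[OF RR_FA 3 4]]])
qed

definition mX :: vec where "mX = (\<lambda>_. 0)(X1 := 2, X2 := 2)"
definition mY :: vec where "mY = (\<lambda>_. 0)(Y1 := 1, Y2 := 1)"
definition mZ :: vec where "mZ = (\<lambda>_. 0)(Z1 := 1, Z2 := 1)"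
definition e4 :: "gen \<Rightarrow> vec" where "e4 t = (\<lambda>_. 0)(t := 4)"

lemma word_mX: "word mX = [X1,X1,X2,X2]" by (simp add: word_def mX_def numeral_2_eq_2)
lemma word_mY: "word mY = [Y1,Y2]" by (simp add: word_def mY_def)
lemma word_mZ: "word mZ = [Z1,Z2]" by (simp add: word_def mZ_def)
lemma word_e4: "word (e4 t) = [t,t,t,t]"
  by (cases t) (simp_all add: word_def e4_def numeral_eq_Suc)

lemma typeI:
  assumes IH: "\<And>v'. vlen v' < vlen v \<Longrightarrow> wgrade (word v') = ge \<Longrightarrow> good (Rey (mon (word v')))"
    and gv: "wgrade (word v) = ge"
    and c: "(2 \<le> v X1 \<and> 2 \<le> v X2) \<or> (1 \<le> v Y1 \<and> 1 \<le> v Y2) \<or> (1 \<le> v Z1 \<and> 1 \<le> v Z2)"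
  shows "good (Rey (mon (word v)))"
  using c
proof (elim disjE)
  assume h: "2 \<le> v X1 \<and> 2 \<le> v X2"
  show ?thesis
    apply (rule typeI_gen[OF IH gv, of mX 1 "[X2,X2,X1,X1]"])
    apply (simp_all add: word_mX Rey_XX cXX gmul_def gs_def gr_def ge_def)
    using h apply (auto simp: mX_def yzc_def vlen_def)
    done
next
  assume h: "1 \<le> v Y1 \<and> 1 \<le> v Y2"
  show ?thesis
    apply (rule typeI_gen[OF IH gv, of mY 1 "[Y2,Y1]"])
    apply (simp_all add: word_mY Rey_YY cYY gmul_def gs_def gr_def ge_def)
    using h apply (auto simp: mY_def yzc_def vlen_def)
    done
next
  assume h: "1 \<le> v Z1 \<and> 1 \<le> v Z2"
  show ?thesis
    apply (rule typeI_gen[OF IH gv, of mZ "-1" "[Z2,Z1]"])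
    apply (simp_all add: word_mZ Rey_ZZ cZZ gmul_def gs_def gr_def ge_def)
    using h apply (auto simp: mZ_def yzc_def vlen_def)
    done
qed

end

context BB begin

lemma main_vec: "wgrade (word v) = ge \<Longrightarrow> good (Rey (mon (word v)))"
proof (induction "vlen v" arbitrary: v rule: less_induct)
  case (less v)
  have IH: "\<And>v'. vlen v' < vlen v \<Longrightarrow> wgrade (word v') = ge \<Longrightarrow> good (Rey (mon (word v')))"
    using less by blast
  have TI: "good (Rey (mon (word v')))" if "vlen v' = vlen v" "wgrade (word v') = ge"
    "(2 \<le> v' X1 \<and> 2 \<le> v' X2) \<or> (1 \<le> v' Y1 \<and> 1 \<le> v' Y2) \<or> (1 \<le> v' Z1 \<and> 1 \<le> v' Z2)" for v'
    by (rule typeI) (use that IH in auto)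
  show ?case
  proof (cases "vlen v \<le> 14")
    case True
    then show ?thesis using less.prems by (intro good_SS Rey_mon_SS) (auto simp: length_word)
  next
    case False
    then have "((2 \<le> v X1 \<and> 2 \<le> v X2) \<or> (1 \<le> v Y1 \<and> 1 \<le> v Y2) \<or> (1 \<le> v Z1 \<and> 1 \<le> v Z2))
       \<or> 6 \<le> v X1 \<or> 6 \<le> v X2 \<or> 5 \<le> v Y1 \<or> 5 \<le> v Y2 \<or> 5 \<le> v Z1 \<or> 5 \<le> v Z2"
      unfolding vlen_def by arith
    then show ?thesis
    proof (elim disjE)
      assume h: "2 \<le> v X1 \<and> 2 \<le> v X2"
      show ?thesis using TI[OF refl less.prems] h by blast
    next
      assume h: "1 \<le> v Y1 \<and> 1 \<le> v Y2"
      show ?thesis using TI[OF refl less.prems] h by blast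
    next
      assume h: "1 \<le> v Z1 \<and> 1 \<le> v Z2"
      show ?thesis using TI[OF refl less.prems] h by blast
    next
      assume h: "6 \<le> v X1"
      show ?thesis
      proof -
        have le: "\<And>t. e4 X1 t \<le> v t" using h by (simp add: e4_def)
        have ep: "even (yzc (e4 X1))" by (simp add: e4_def yzc_def)
        have gp: "wgrade (word (e4 X1)) = ge" by (simp add: word_e4 gmul_def gs_def gr_def ge_def)
        have gp': "wgrade (word (e4 X2)) = ge" by (simp add: word_e4 gmul_def gs_def gr_def ge_def)
        have pos: "0 < vlen (e4 X1)" by (simp add: e4_def vlen_def)
        have sm: "vlen (e4 X1) \<le> 14" by (simp add: e4_def vlen_def)
        have lp: "vlen (e4 X2) = vlen (e4 X1)" by (simp add: e4_def vlen_def)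
        have G: "Rey (mon (word (e4 X1))) = psmul (1/2) (padd (mon (word (e4 X1))) (psmul 1 (mon (word (e4 X2)))))"
          by (simp only: word_e4 Rey_P_X1)
        show ?thesis
          apply (rule pure_gen[OF _ less.prems le ep gp pos sm G gp' lp])
          apply (rule IH, assumption, assumption)
          apply (rule TI)
          apply assumption
          apply assumption
          using h apply (auto simp: e4_def vadd_def)
          done
      qed
    next
      assume h: "6 \<le> v X2"
      show ?thesis
      proof -
        have le: "\<And>t. e4 X2 t \<le> v t" using h by (simp add: e4_def)
        have ep: "even (yzc (e4 X2))" by (simp add: e4_def yzc_def)
        have gp: "wgrade (word (e4 X2)) = ge" by (simp add: word_e4 gmul_def gs_def gr_def ge_def)
        have gp': "wgrade (word (e4 X1)) = ge" by (simp add: word_e4 gmul_def gs_def gr_def ge_def)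
        have pos: "0 < vlen (e4 X2)" by (simp add: e4_def vlen_def)
        have sm: "vlen (e4 X2) \<le> 14" by (simp add: e4_def vlen_def)
        have lp: "vlen (e4 X1) = vlen (e4 X2)" by (simp add: e4_def vlen_def)
        have G: "Rey (mon (word (e4 X2))) = psmul (1/2) (padd (mon (word (e4 X2))) (psmul 1 (mon (word (e4 X1)))))"
          by (simp only: word_e4 Rey_P_X2)
        show ?thesis
          apply (rule pure_gen[OF _ less.prems le ep gp pos sm G gp' lp])
          apply (rule IH, assumption, assumption)
          apply (rule TI)
          apply assumption
          apply assumption
          using h apply (auto simp: e4_def vadd_def)
          done
      qed
    next
      assume h: "5 \<le> v Y1"
      show ?thesis
      proof -
        have le: "\<And>t. e4 Y1 t \<le> v t" using h by (simp add: e4_def)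
        have ep: "even (yzc (e4 Y1))" by (simp add: e4_def yzc_def)
        have gp: "wgrade (word (e4 Y1)) = ge" by (simp add: word_e4 gmul_def gs_def gr_def ge_def)
        have gp': "wgrade (word (e4 Y2)) = ge" by (simp add: word_e4 gmul_def gs_def gr_def ge_def)
        have pos: "0 < vlen (e4 Y1)" by (simp add: e4_def vlen_def)
        have sm: "vlen (e4 Y1) \<le> 14" by (simp add: e4_def vlen_def)
        have lp: "vlen (e4 Y2) = vlen (e4 Y1)" by (simp add: e4_def vlen_def)
        have G: "Rey (mon (word (e4 Y1))) = psmul (1/2) (padd (mon (word (e4 Y1))) (psmul 1 (mon (word (e4 Y2)))))"
          by (simp only: word_e4 Rey_P_Y1)
        show ?thesis
          apply (rule pure_gen[OF _ less.prems le ep gp pos sm G gp' lp])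
          apply (rule IH, assumption, assumption)
          apply (rule TI)
          apply assumption
          apply assumption
          using h apply (auto simp: e4_def vadd_def)
          done
      qed
    next
      assume h: "5 \<le> v Y2"
      show ?thesis
      proof -
        have le: "\<And>t. e4 Y2 t \<le> v t" using h by (simp add: e4_def)
        have ep: "even (yzc (e4 Y2))" by (simp add: e4_def yzc_def)
        have gp: "wgrade (word (e4 Y2)) = ge" by (simp add: word_e4 gmul_def gs_def gr_def ge_def)
        have gp': "wgrade (word (e4 Y1)) = ge" by (simp add: word_e4 gmul_def gs_def gr_def ge_def)
        have pos: "0 < vlen (e4 Y2)" by (simp add: e4_def vlen_def)
        have sm: "vlen (e4 Y2) \<le> 14" by (simp add: e4_def vlen_def)
        have lp: "vlen (e4 Y1) = vlen (e4 Y2)" by (simp add: e4_def vlen_def)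
        have G: "Rey (mon (word (e4 Y2))) = psmul (1/2) (padd (mon (word (e4 Y2))) (psmul 1 (mon (word (e4 Y1)))))"
          by (simp only: word_e4 Rey_P_Y2)
        show ?thesis
          apply (rule pure_gen[OF _ less.prems le ep gp pos sm G gp' lp])
          apply (rule IH, assumption, assumption)
          apply (rule TI)
          apply assumption
          apply assumption
          using h apply (auto simp: e4_def vadd_def)
          done
      qed
    next
      assume h: "5 \<le> v Z1"
      show ?thesis
      proof -
        have le: "\<And>t. e4 Z1 t \<le> v t" using h by (simp add: e4_def)
        have ep: "even (yzc (e4 Z1))" by (simp add: e4_def yzc_def)
        have gp: "wgrade (word (e4 Z1)) = ge" by (simp add: word_e4 gmul_def gs_def gr_def ge_def)
        have gp': "wgrade (word (e4 Z2)) = ge" by (simp add: word_e4 gmul_def gs_def gr_def ge_def)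
        have pos: "0 < vlen (e4 Z1)" by (simp add: e4_def vlen_def)
        have sm: "vlen (e4 Z1) \<le> 14" by (simp add: e4_def vlen_def)
        have lp: "vlen (e4 Z2) = vlen (e4 Z1)" by (simp add: e4_def vlen_def)
        have G: "Rey (mon (word (e4 Z1))) = psmul (1/2) (padd (mon (word (e4 Z1))) (psmul 1 (mon (word (e4 Z2)))))"
          by (simp only: word_e4 Rey_P_Z1)
        show ?thesis
          apply (rule pure_gen[OF _ less.prems le ep gp pos sm G gp' lp])
          apply (rule IH, assumption, assumption)
          apply (rule TI)
          apply assumption
          apply assumption
          using h apply (auto simp: e4_def vadd_def)
          done
      qed
    next
      assume h: "5 \<le> v Z2"
      show ?thesis
      proof -
        have le: "\<And>t. e4 Z2 t \<le> v t" using h by (simp add: e4_def)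
        have ep: "even (yzc (e4 Z2))" by (simp add: e4_def yzc_def)
        have gp: "wgrade (word (e4 Z2)) = ge" by (simp add: word_e4 gmul_def gs_def gr_def ge_def)
        have gp': "wgrade (word (e4 Z1)) = ge" by (simp add: word_e4 gmul_def gs_def gr_def ge_def)
        have pos: "0 < vlen (e4 Z2)" by (simp add: e4_def vlen_def)
        have sm: "vlen (e4 Z2) \<le> 14" by (simp add: e4_def vlen_def)
        have lp: "vlen (e4 Z1) = vlen (e4 Z2)" by (simp add: e4_def vlen_def)
        have G: "Rey (mon (word (e4 Z2))) = psmul (1/2) (padd (mon (word (e4 Z2))) (psmul 1 (mon (word (e4 Z1)))))"
          by (simp only: word_e4 Rey_P_Z2)
        show ?thesis
          apply (rule pure_gen[OF _ less.prems le ep gp pos sm G gp' lp])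
          apply (rule IH, assumption, assumption)
          apply (rule TI)
          apply assumption
          apply assumption
          using h apply (auto simp: e4_def vadd_def)
          done
      qed
    qed
  qed
qed

end

context BB begin

lemma good_Rey_word: "wgrade w = ge \<Longrightarrow> good (Rey (mon w))"
proof -
  assume g: "wgrade w = ge"
  have a: "aeq w (word (nf w))" by (rule nf_aeq)
  then have "wgrade (word (nf w)) = ge" using g by (simp add: aeq_def)
  then have "good (Rey (mon (word (nf w))))" by (rule main_vec)
  then show ?thesis using good_Rey_aeq[OF aeq_sym[OF a]] by simp
qed

lemma good_Rey_graded: "F \<in> FA \<Longrightarrow> (\<forall>w. F w \<noteq> 0 \<longrightarrow> wgrade w = ge) \<Longrightarrow> good (Rey F)"
proof (induction rule: FA_induct)
  case zero
  have "Rey (\<lambda>_. 0) = (\<lambda>_. 0)" by (simp add: Rey_def act_g_Mg psmul_def)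
  then show ?case by (simp add: good_zero)
next
  case (step g w c)
  note pr = step.prems[rule_format]
  have "wgrade w = ge" using pr[of w] step by (simp add: padd_def psmul_def mon_def)
  then have "good (Rey (mon w))" by (rule good_Rey_word)
  moreover have "\<forall>x. g x \<noteq> 0 \<longrightarrow> wgrade x = ge"
  proof (intro allI impI)
    fix x assume "g x \<noteq> 0"
    then have "x \<noteq> w" using step(2) by auto
    then show "wgrade x = ge" using pr[of x] \<open>g x \<noteq> 0\<close> by (simp add: padd_def psmul_def mon_def)
  qed
  then have "good (Rey g)" using step by auto
  ultimately show ?case using step by (simp add: Rey_padd Rey_psmul good_padd good_psmul)
qed

lemma card_Grp: "card Grp = 8" by (simp add: Grp_eq)

lemma final: assumes "Binv RR f" shows "good f"
proof -
  have fFA: "f \<in> FA" and p: "psub f (proj_e f) \<in> JJ" and inv: "\<And>g. g \<in> Grp \<Longrightarrow> psub (act_g g f) f \<in> JJ"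
    using assms by (auto simp: Binv_def JJ_def)
  have "(\<lambda>w. \<Sum>g\<in>Grp. psmul (-1/8) (psub (act_g g f) f) w) \<in> JJ"
    using inv unfolding JJ_def by (intro ideal_sum[OF RR_FA] finite_Grp ideal_gen.smul) (auto simp: JJ_def)
  moreover have "(\<lambda>w. \<Sum>g\<in>Grp. psmul (-1/8) (psub (act_g g f) f) w) = psub f (Rey f)"
  proof
    fix w
    have "(\<Sum>g\<in>Grp. psmul (-1/8) (psub (act_g g f) f) w) = (\<Sum>g\<in>Grp. f w / 8 - act_g g f w / 8)"
      by (intro sum.cong) (auto simp: psmul_def psub_def field_simps)
    also have "\<dots> = f w - (1/8) * (\<Sum>g\<in>Grp. act_g g f w)"
      by (simp add: sum_subtractf card_Grp sum_divide_distrib)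
    finally show "(\<Sum>g\<in>Grp. psmul (-1/8) (psub (act_g g f) f) w) = psub f (Rey f) w"
      by (simp add: psub_def Rey_def psmul_def)
  qed
  ultimately have c1: "cg f (Rey f)" by (simp add: cg_def')
  have "cg f (proj_e f)" using p by (simp add: cg_def')
  then have c2: "cg (Rey f) (Rey (proj_e f))" using fFA by (intro Rey_cg) auto
  have pf: "proj_e f \<in> FA" using fFA by simp
  have "good (Rey (proj_e f))" by (rule good_Rey_graded[OF pf]) (auto simp: proj_e_def)
  then show ?thesis using c1 c2 cong_trans[OF RR_FA] good_cg by blast
qed

end

theorem mainTheorem10:
  fixes u1 u2 u3 u4 :: complex
  assumes "u1 \<noteq> 0" and "u2 \<noteq> 0" and "u3 \<noteq> 0" and "u4 \<noteq> 0"
    and "u3 ^ 16 = u4 ^ 16"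
  shows "\<forall>f. Binv (Brels 1 1 (-1) u1 u2 u3 u4) f \<longrightarrow>
           (\<exists>h \<in> subalg {h. h \<in> FA \<and> Binv (Brels 1 1 (-1) u1 u2 u3 u4) h \<and> (\<exists>d\<le>14. homog d h)}.
              psub f h \<in> ideal_gen (Brels 1 1 (-1) u1 u2 u3 u4))"
proof -
  interpret BB u1 u2 u3 u4 using assms by unfold_locales
  show ?thesis
  proof (intro allI impI)
    fix f assume "Binv (Brels 1 1 (-1) u1 u2 u3 u4) f"
    then have "good f" by (intro final) (simp add: RR_def)
    then show "\<exists>h \<in> subalg {h. h \<in> FA \<and> Binv (Brels 1 1 (-1) u1 u2 u3 u4) h \<and> (\<exists>d\<le>14. homog d h)}.
              psub f h \<in> ideal_gen (Brels 1 1 (-1) u1 u2 u3 u4)"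
      unfolding good_def SS_def cg_def' JJ_def by (simp add: RR_def)
  qed
qed

end
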